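(* Let $\mathcal C$ be an $\mathbb F_q$-conic in a Baer subplane $\mathcal B$ of $\mathrm{PG}(2,q^2)$ that is secant to $\ell_\infty$, and let the $\mathbb F_{q^2}$-conic $\mathcal C^+$ meet $\ell_\infty$ in the points $\bar P,\bar Q$ (possibly equal). Then in $\mathrm{PG}(4,q)$, $[\mathcal C]$ is a non-degenerate conic in the plane $[\mathcal B]$, and $[\mathcal C^+]\cap\Sigma_\infty=[P]\cup[Q]$. Moreover: (1) if $\bar P=\bar Q$ then $\bar P\in\mathcal B$ and $[\mathcal C]$ meets $\Sigma_\infty$ in the single point $[P]\cap[\mathcal B]$; (2) if $\bar P\ne\bar Q$ and $\bar P,\bar Q\in\mathcal B$, then $[\mathcal C]$ meets $\Sigma_\infty$ in the two points $[P]\cap[\mathcal B]$ and $[Q]\cap[\mathcal B]$; (3) if $\bar P\neq\bar Q$ and $\bar P,\bar Q\notin\mathcal B$, then $[\mathcal C]$ is a $(PQ^q)$-special conic.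
   Context: Bruck–Bose setting: $q$ a prime power; $\Sigma_\infty$ a hyperplane of $\mathrm{PG}(4,q)$ with regular spread $\mathcal S$; affine points $A$ of $\mathrm{PG}(2,q^2)$ correspond to points $[A]$ of $\mathrm{PG}(4,q)\setminus\Sigma_\infty$, points $\bar T\in\ell_\infty$ to spread lines $[T]$, lines $\ne\ell_\infty$ to planes not in $\Sigma_\infty$ containing a spread line. In $\mathrm{PG}(4,q^2)$ the transversals of $\mathcal S$ are conjugate lines $g,g^q$ (conjugation $X\mapsto X^q$ of coordinates) with $[T]^\star=TT^q$ where $T=[T]^\star\cap g$; $\mathcal V^\star$ denotes the extension to $\mathrm{PG}(4,q^2)$ of a set defined by equations over $\mathbb F_q$. An $\mathbb F_{q^2}$-conic is a non-degenerate conic of $\mathrm{PG}(2,q^2)$; an $\mathbb F_q$-conic is a non-degenerate conic of a Baer subplane; for an $\mathbb F_q$-conic $\mathcal C$, $\mathcal C^+$ is the unique $\mathbb F_{q^2}$-conic containing it. For a non-degenerate conic $\mathcal O$ of $\mathrm{PG}(2,q^2)$ with equation $f=0$, writing $f=f_\infty+\tau f_0$ after substituting $x=x_0+x_1\tau$, $y=y_0+y_1\tau$ ($\tau$ a primitive element of $\mathbb F_{q^2}$, $f_\infty,f_0$ quadratic forms over $\mathbb F_q$ in $(x_0,x_1,y_0,y_1,z)$), $[\mathcal O]$ is the intersection of the quadrics $f_\infty=0$, $f_0=0$ of $\mathrm{PG}(4,q)$; its affine points are the $[A]$, $A\in\mathcal O$ affine. For a Baer subplane $\mathcal B$ secant to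 $\ell_\infty$ (meeting it in a Baer subline), $[\mathcal B]$ is the plane of $\mathrm{PG}(4,q)$, not in $\Sigma_\infty$ and containing no spread line, whose affine points are the $[X]$, $X$ affine in $\mathcal B$; for $\mathcal C\subset\mathcal B$, $[\mathcal C]$ denotes the closure in $[\mathcal B]$ of $\{[X]: X\in\mathcal C \text{ affine}\}$ (its points on $\Sigma_\infty$ being $[T]\cap[\mathcal B]$ for $\bar T\in\mathcal C\cap\ell_\infty$). For distinct points $P,Q\in g$, a non-degenerate conic $\mathcal N$ of $\mathrm{PG}(4,q)$ is $(PQ^q)$-special if $\mathcal N^\star$ contains one point of the line $PQ^q$ and one point of the line $P^qQ$. *)

theory Defs
  imports "HOL-Analysis.Finite_Cartesian_Product" "HOL-Library.Numeral_Type"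
begin

text \<open>Conventions.  'k is a finite field playing the role of GF(q^2), where
  CARD('k) = q^2.  GF(q) is the subfield of elements fixed by x \<mapsto> x^q,
  and x \<mapsto> x^q is the conjugation.  Points of PG(2,q^2) are nonzero vectors
  of 'k^3 (coordinates (x,y,z), indices 1,2,3); a set of points is a set of
  nonzero vectors (a union of punctured 1-dim subspaces).  l_inf is z = 0.
  Points of PG(4,q^2) are nonzero vectors of 'k^5 with coordinates
  (x0,x1,y0,y1,z) (indices 1..5); points of PG(4,q) are the nonzero vectors
  all of whose coordinates lie in GF(q) (again sets of points are sets of
  representing vectors).\<close>

definition Fq :: "nat \<Rightarrow> 'k::field set" where
  "Fq q = {x. x ^ q = x}"

definition conjv :: "nat \<Rightarrow> 'k::field ^ 'n \<Rightarrow> 'k ^ 'n" where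
  "conjv q v = (\<chi> i. (v $ i) ^ q)"

definition primitive_elt :: "'k::field \<Rightarrow> bool" where
  "primitive_elt t \<longleftrightarrow> (\<forall>y. y \<noteq> 0 \<longrightarrow> (\<exists>n::nat. y = t ^ n))"

definition lspan :: "'k::field set \<Rightarrow> ('k ^ 'n) set \<Rightarrow> ('k ^ 'n) set" where
  "lspan K S = {v. \<exists>F c. finite F \<and> F \<subseteq> S \<and> (\<forall>s\<in>F. c s \<in> K) \<and>
                        v = (\<Sum>s\<in>F. c s *s s)}"

definition pcone :: "'k::field set \<Rightarrow> 'k ^ 'n \<Rightarrow> ('k ^ 'n) set" where
  "pcone K x = {c *s x | c. c \<in> K \<and> c \<noteq> 0}"

definition is_point :: "'k::field set \<Rightarrow> ('k ^ 'n) set \<Rightarrow> bool" where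
  "is_point K S \<longleftrightarrow> (\<exists>x. x \<noteq> 0 \<and> (\<forall>i. x $ i \<in> K) \<and> S = pcone K x)"

definition real5 :: "nat \<Rightarrow> ('k::field ^ 5) set" where
  "real5 q = {v. v \<noteq> 0 \<and> (\<forall>i. v $ i \<in> Fq q)}"

definition Sigma_inf :: "nat \<Rightarrow> ('k::field ^ 5) set" where
  "Sigma_inf q = {v \<in> real5 q. v $ 5 = 0}"

type_synonym 'k qform = "'k \<times> 'k \<times> 'k \<times> 'k \<times> 'k \<times> 'k"

fun qf :: "'k::field qform \<Rightarrow> 'k \<Rightarrow> 'k \<Rightarrow> 'k \<Rightarrow> 'k" where
  "qf (a, b, c, f, g, h) x y z = a*x^2 + b*y^2 + c*z^2 + f*y*z + g*x*z + h*x*y"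

text \<open>Non-degeneracy (non-singularity) of a ternary quadratic form, valid in every
  characteristic: the half-determinant 4abc + fgh - af^2 - bg^2 - ch^2 is nonzero.\<close>
fun nondeg_qf :: "'k::field qform \<Rightarrow> bool" where
  "nondeg_qf (a, b, c, f, g, h) \<longleftrightarrow> 4*a*b*c + f*g*h - a*f^2 - b*g^2 - c*h^2 \<noteq> 0"

fun qf_over :: "'k::field set \<Rightarrow> 'k qform \<Rightarrow> bool" where
  "qf_over K (a, b, c, f, g, h) \<longleftrightarrow> a \<in> K \<and> b \<in> K \<and> c \<in> K \<and> f \<in> K \<and> g \<in> K \<and> h \<in> K"

definition qf3 :: "'k::field qform \<Rightarrow> 'k ^ 3 \<Rightarrow> 'k" where
  "qf3 F w = qf F (w $ 1) (w $ 2) (w $ 3)"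

text \<open>A Baer subplane is the image of PG(2,q) under an invertible matrix M.\<close>
definition baer_pts :: "nat \<Rightarrow> 'k::field ^ 3 ^ 3 \<Rightarrow> ('k ^ 3) set" where
  "baer_pts q M = {c *s (M *v w) | c w. c \<noteq> 0 \<and> w \<noteq> 0 \<and> (\<forall>i. w $ i \<in> Fq q)}"

text \<open>B is secant to l_inf: it contains two distinct points of l_inf (hence meets
  l_inf in a Baer subline).\<close>
definition baer_secant :: "nat \<Rightarrow> 'k::field ^ 3 ^ 3 \<Rightarrow> bool" where
  "baer_secant q M \<longleftrightarrow> (\<exists>X Y. X \<in> baer_pts q M \<and> Y \<in> baer_pts q M \<and>
       X $ 3 = 0 \<and> Y $ 3 = 0 \<and> pcone UNIV X \<noteq> pcone UNIV Y)"

definition Fq_conic_pts :: "nat \<Rightarrow> 'k::field ^ 3 ^ 3 \<Rightarrow> 'k qform \<Rightarrow> ('k ^ 3) set" where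
  "Fq_conic_pts q M F = {c *s (M *v w) | c w. c \<noteq> 0 \<and> w \<noteq> 0 \<and> (\<forall>i. w $ i \<in> Fq q) \<and> qf3 F w = 0}"

text \<open>C^+ : the F_{q^2}-conic containing it (same equation, over F_{q^2}).\<close>
definition Cplus_pts :: "'k::field ^ 3 ^ 3 \<Rightarrow> 'k qform \<Rightarrow> ('k ^ 3) set" where
  "Cplus_pts M F = {M *v w | w. w \<noteq> 0 \<and> qf3 F w = 0}"

text \<open>The point (x0 + x1 t, y0 + y1 t, z) of PG(2,q^2) associated with (x0,x1,y0,y1,z).\<close>
definition emb :: "'k::field \<Rightarrow> 'k ^ 5 \<Rightarrow> 'k ^ 3" where
  "emb t v = (\<chi> i. if i = 1 then v$1 + v$2 * t else if i = 2 then v$3 + v$4 * t else v$5)"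

text \<open>[X]: for an affine point X the point [X], for a point X of l_inf the spread
  line [X] (regular spread of Sigma_inf).\<close>
definition bb :: "nat \<Rightarrow> 'k::field \<Rightarrow> 'k ^ 3 \<Rightarrow> ('k ^ 5) set" where
  "bb q t X = {v \<in> real5 q. emb t v \<in> pcone UNIV X}"

definition bb_baer :: "nat \<Rightarrow> 'k::field \<Rightarrow> 'k ^ 3 ^ 3 \<Rightarrow> ('k ^ 5) set" where
  "bb_baer q t M = lspan (Fq q) (\<Union>{bb q t X | X. X \<in> baer_pts q M \<and> X $ 3 \<noteq> 0}) - {0}"

definition bb_sub :: "nat \<Rightarrow> 'k::field \<Rightarrow> 'k ^ 3 ^ 3 \<Rightarrow> ('k ^ 3) set \<Rightarrow> ('k ^ 5) set" where
  "bb_sub q t M C = \<Union>{bb q t X | X. X \<in> C \<and> X $ 3 \<noteq> 0}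
                  \<union> \<Union>{bb q t T \<inter> bb_baer q t M | T. T \<in> C \<and> T $ 3 = 0}"

text \<open>[O] for an F_{q^2}-conic O with equation f: the intersection of the quadrics
  f_inf = 0, f_0 = 0 where f(x0 + x1 t, y0 + y1 t, z) = f_inf + t f_0; for a
  point of PG(4,q) this says exactly that f vanishes at emb t v.\<close>
definition bb_conic :: "nat \<Rightarrow> 'k::field \<Rightarrow> ('k ^ 3 \<Rightarrow> 'k) \<Rightarrow> ('k ^ 5) set" where
  "bb_conic q t f = {v \<in> real5 q. f (emb t v) = 0}"

text \<open>The transversal g of the regular spread in PG(4,q^2) (g^q is its conjugate).\<close>
definition gline :: "nat \<Rightarrow> 'k::field \<Rightarrow> ('k ^ 5) set" where
  "gline q t = {w. w \<noteq> 0 \<and> w $ 5 = 0 \<and> w $ 1 + t ^ q * w $ 2 = 0 \<and> w $ 3 + t ^ q * w $ 4 = 0}"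

definition ext :: "('k::field ^ 5) set \<Rightarrow> ('k ^ 5) set" where
  "ext S = lspan UNIV S - {0}"

definition gpt :: "nat \<Rightarrow> 'k::field \<Rightarrow> 'k ^ 3 \<Rightarrow> ('k ^ 5) set" where
  "gpt q t T = ext (bb q t T) \<inter> gline q t"

definition join :: "('k::field ^ 5) set \<Rightarrow> ('k ^ 5) set \<Rightarrow> ('k ^ 5) set" where
  "join S1 S2 = lspan UNIV (S1 \<union> S2) - {0}"

definition Fq_indep3 :: "nat \<Rightarrow> 'k::field ^ 5 \<Rightarrow> 'k ^ 5 \<Rightarrow> 'k ^ 5 \<Rightarrow> bool" where
  "Fq_indep3 q u v w \<longleftrightarrow> (\<forall>a b c. a \<in> Fq q \<and> b \<in> Fq q \<and> c \<in> Fq q \<and>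
       a *s u + b *s v + c *s w = 0 \<longrightarrow> a = 0 \<and> b = 0 \<and> c = 0)"

definition conic_on :: "'k::field set \<Rightarrow> 'k ^ 5 \<Rightarrow> 'k ^ 5 \<Rightarrow> 'k ^ 5 \<Rightarrow> 'k qform \<Rightarrow> ('k ^ 5) set" where
  "conic_on K u v w F = {a *s u + b *s v + c *s w | a b c.
       a \<in> K \<and> b \<in> K \<and> c \<in> K \<and> (a, b, c) \<noteq> (0, 0, 0) \<and> qf F a b c = 0}"

definition plane_pts :: "nat \<Rightarrow> 'k::field ^ 5 \<Rightarrow> 'k ^ 5 \<Rightarrow> 'k ^ 5 \<Rightarrow> ('k ^ 5) set" where
  "plane_pts q u v w = {a *s u + b *s v + c *s w | a b c.
       a \<in> Fq q \<and> b \<in> Fq q \<and> c \<in> Fq q \<and> (a, b, c) \<noteq> (0, 0, 0)}"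

definition conic_rep :: "nat \<Rightarrow> ('k::field ^ 5) set \<Rightarrow> 'k ^ 5 \<Rightarrow> 'k ^ 5 \<Rightarrow> 'k ^ 5 \<Rightarrow> 'k qform \<Rightarrow> bool" where
  "conic_rep q N u v w F \<longleftrightarrow> u \<in> real5 q \<and> v \<in> real5 q \<and> w \<in> real5 q \<and> Fq_indep3 q u v w \<and>
       qf_over (Fq q) F \<and> nondeg_qf F \<and> N = conic_on (Fq q) u v w F"

definition nondeg_conic_in_plane :: "nat \<Rightarrow> ('k::field ^ 5) set \<Rightarrow> ('k ^ 5) set \<Rightarrow> bool" where
  "nondeg_conic_in_plane q N Pl \<longleftrightarrow>
     (\<exists>u v w F. conic_rep q N u v w F \<and> Pl = plane_pts q u v w)"

text \<open>N is (PQ^q)-special: N^* contains one point of the line P Q^q and one point of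
  the line P^q Q (P, Q points of g, given as punctured 1-spaces).\<close>
definition special :: "nat \<Rightarrow> ('k::field ^ 5) set \<Rightarrow> ('k ^ 5) set \<Rightarrow> ('k ^ 5) set \<Rightarrow> bool" where
  "special q P Q N \<longleftrightarrow> (\<exists>u v w F. conic_rep q N u v w F \<and>
       is_point UNIV (conic_on UNIV u v w F \<inter> join P (conjv q ` Q)) \<and>
       is_point UNIV (conic_on UNIV u v w F \<inter> join (conjv q ` P) Q))"

end

theory Submission
  imports Defs "HOL-Computational_Algebra.Primes"
begin


lemma ff_power_card:
  fixes x :: "'a :: {finite,field}"
  shows "x ^ card (UNIV :: 'a set) = x"
proof (cases "x = 0")
  case False
  have "x * (\<Prod>y\<in>UNIV-{0}. x * y) = x * x ^ (card (UNIV :: 'a set) - 1) * \<Prod>(UNIV-{0})"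
    by (simp add: prod.distrib mult_ac)
  also have "x * x ^ (card (UNIV :: 'a set) - 1) = x ^ Suc (card (UNIV :: 'a set) - 1)"
    by (subst power_Suc) auto
  also have "Suc (card (UNIV :: 'a set) - 1) = card (UNIV :: 'a set)"
    using finite_UNIV_card_ge_0[where ?'a = 'a] by simp
  also have "(\<Prod>y\<in>UNIV-{0}. x * y) = (\<Prod>y\<in>UNIV-{0}. y)"
    by (rule prod.reindex_bij_witness[of _ "\<lambda>y. y / x" "\<lambda>y. x * y"]) (use False in auto)
  finally show ?thesis
    by simp
qed (use finite_UNIV_card_ge_0[where ?'a = 'a] in auto)

lemma ff_CHAR_prime: "prime CHAR('a::{finite,field})"
  by (rule prime_CHAR_semidom) (rule finite_imp_CHAR_pos, simp)

lemma ff_inverse_of_nat: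
  fixes d :: nat
  assumes "(of_nat d :: 'a::{finite,field}) \<noteq> 0"
  shows "\<exists>m. inverse (of_nat d :: 'a) = of_nat m"
proof -
  let ?N = "card (UNIV :: 'a set)"
  have N2: "?N \<ge> 2"
  proof -
    have "{0::'a, 1} \<subseteq> UNIV" by simp
    hence "card {0::'a,1} \<le> ?N" by (intro card_mono) auto
    thus ?thesis by simp
  qed
  have "(of_nat d :: 'a) ^ ?N = of_nat d" by (rule ff_power_card)
  moreover have "?N = Suc (Suc (?N - 2))" using N2 by simp
  ultimately have "(of_nat d :: 'a) * ((of_nat d) * of_nat d ^ (?N - 2)) = of_nat d"
    by (metis power_Suc)
  hence "(of_nat d :: 'a) * of_nat d ^ (?N - 2) = 1" using assms
    by (metis mult_cancel_left1)
  hence "inverse (of_nat d :: 'a) = of_nat (d ^ (?N - 2))"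
    by (metis inverse_unique of_nat_power)
  thus ?thesis by blast
qed

definition addclosed :: "'a::field set \<Rightarrow> bool" where
  "addclosed V \<longleftrightarrow> 0 \<in> V \<and> (\<forall>x\<in>V. \<forall>y\<in>V. x + y \<in> V)"

lemma addclosed_of_nat:
  assumes "addclosed V" "x \<in> V" shows "of_nat m * x \<in> V"
  using assms by (induction m) (auto simp: addclosed_def algebra_simps)

lemma addclosed_neg:
  fixes V :: "'a::{finite,field} set"
  assumes "addclosed V" "x \<in> V" shows "- x \<in> V"
proof -
  let ?p = "CHAR('a)"
  have p: "?p > 0" using ff_CHAR_prime[where 'a='a] prime_gt_0_nat by blast
  have "of_nat (?p - 1) * x + x = of_nat ?p * x"
    using p by (simp add: algebra_simps of_nat_diff)
  hence "- x = of_nat (?p - 1) * x" by (metis add_eq_0_iff2 of_nat_CHAR mult_zero_left)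
  thus ?thesis using addclosed_of_nat[OF assms] by simp
qed

lemma of_nat_mod_CHAR': "(of_nat (x mod CHAR('a)) :: 'a::{finite,field}) = of_nat x"
proof -
  have "(of_nat x :: 'a) = of_nat (x mod CHAR('a) + CHAR('a) * (x div CHAR('a)))"
    by simp
  also have "\<dots> = of_nat (x mod CHAR('a)) + of_nat (CHAR('a)) * of_nat (x div CHAR('a))"
    by (simp only: of_nat_add of_nat_mult)
  finally show ?thesis by simp
qed

lemma addclosed_step:
  fixes V :: "'a::{finite,field} set"
  assumes V: "addclosed V" and g: "g \<notin> V"
  shows "\<exists>V'::'a set. addclosed V' \<and> card V' = card V * CHAR('a)"
proof -
  let ?p = "CHAR('a)"
  have p: "?p > 0" using ff_CHAR_prime[where 'a='a] prime_gt_0_nat by blast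
  define f where "f = (\<lambda>(a, c::nat). a + of_nat c * g)"
  define V' where "V' = f ` (V \<times> {..<?p})"
  have inj: "inj_on f (V \<times> {..<?p})"
  proof (rule inj_onI)
    fix x y assume xy: "x \<in> V \<times> {..<?p}" "y \<in> V \<times> {..<?p}" "f x = f y"
    obtain a c a' c' where xyd: "x = (a, c)" "y = (a', c')" by (cases x, cases y) auto
    have a: "a \<in> V" "c \<in> {..<?p}" "a' \<in> V" "c' \<in> {..<?p}" and e: "f (a, c) = f (a', c')"
      using xy xyd by auto
    show "x = y"
    proof (cases "c = c'")
      case True then show ?thesis using e xyd by (simp add: f_def)
    next
      case False
      define D where "D = (of_nat (c + (?p - 1) * c') :: 'a)"
      have "(of_nat ((?p - 1) * c') :: 'a) = - of_nat c'"
      proof -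
        have "(of_nat ((?p - 1) * c') :: 'a) + of_nat c' = of_nat (?p * c')"
          using p by (simp add: algebra_simps of_nat_diff)
        also have "\<dots> = 0" by simp
        finally show ?thesis by (metis add_eq_0_iff2)
      qed
      hence Dv: "D = of_nat c - of_nat c'" unfolding D_def by simp
      have "D \<noteq> 0"
      proof
        assume "D = 0"
        hence "(of_nat c :: 'a) = of_nat c'" using Dv by simp
        show False
        proof (cases "c < c'")
          case True
          hence "?p dvd (c' - c)" using of_nat_eq_iff_char_dvd[OF True, where 'a='a] \<open>(of_nat c :: 'a) = of_nat c'\<close> by simp
          thus False using a True by (auto dest: dvd_imp_le)
        next
          case F2: False
          hence lt: "c' < c" using \<open>c \<noteq> c'\<close> by simp
          hence "?p dvd (c - c')" using of_nat_eq_iff_char_dvd[OF lt, where 'a='a] \<open>(of_nat c :: 'a) = of_nat c'\<close> by simp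
          thus False using a lt by (auto dest: dvd_imp_le)
        qed
      qed
      then obtain m where m: "inverse D = of_nat m" unfolding D_def
        using ff_inverse_of_nat by blast
      have e': "a + of_nat c * g = a' + of_nat c' * g" using e by (simp add: f_def)
      have "D * g = a' - a" unfolding Dv left_diff_distrib using e'
        by (metis add_diff_cancel_left add_diff_cancel_right diff_diff_eq2 diff_add_cancel)
      hence "g = inverse D * (a' + - a)" using \<open>D \<noteq> 0\<close>
        by (simp add: field_simps)
      also have "\<dots> \<in> V" unfolding m
        using addclosed_of_nat[OF V] addclosed_neg[OF V] a V unfolding addclosed_def by blast
      finally show ?thesis using g by simp
    qed
  qed
  have "addclosed V'"
    unfolding addclosed_def
  proof
    show "0 \<in> V'" unfolding V'_def f_def using V p unfolding addclosed_def
      by (auto intro!: image_eqI[of _ _ "(0, 0)"])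
    show "\<forall>x\<in>V'. \<forall>y\<in>V'. x + y \<in> V'"
    proof (clarify)
      fix x y assume "x \<in> V'" "y \<in> V'"
      then obtain a c a' c' where "a \<in> V" "a' \<in> V" "c < ?p" "c' < ?p"
        "x = a + of_nat c * g" "y = a' + of_nat c' * g"
        unfolding V'_def f_def by auto
      hence "x + y = f (a + a', (c + c') mod ?p)"
        by (simp add: f_def of_nat_mod_CHAR' algebra_simps)
      moreover have "(a + a', (c + c') mod ?p) \<in> V \<times> {..<?p}"
        using \<open>a \<in> V\<close> \<open>a' \<in> V\<close> V p unfolding addclosed_def by auto
      ultimately show "x + y \<in> V'" unfolding V'_def by blast
    qed
  qed
  moreover have "card V' = card V * ?p"
    unfolding V'_def using card_image[OF inj] by (simp add: card_cartesian_product)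
  ultimately show ?thesis by blast
qed

lemma card_field_CHAR_power: "\<exists>n. CARD('a::{finite,field}) = CHAR('a) ^ n"
proof -
  have main: "\<And>V::'a set. addclosed V \<Longrightarrow> \<exists>n. CARD('a) = card V * CHAR('a) ^ n"
  proof -
    fix V :: "'a set"
    show "addclosed V \<Longrightarrow> \<exists>n. CARD('a) = card V * CHAR('a) ^ n"
    proof (induction "CARD('a) - card V" arbitrary: V rule: less_induct)
      case (less V)
      show ?case
      proof (cases "V = UNIV")
        case True then show ?thesis by (intro exI[of _ 0]) simp
      next
        case False
        then obtain g where g: "g \<notin> V" by blast
        from addclosed_step[OF less.prems g] obtain V' :: "'a set" where
          V': "addclosed V'" "card V' = card V * CHAR('a)" by blast
        have p: "CHAR('a) > 1" using ff_CHAR_prime[where 'a='a] prime_gt_1_nat by blast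
        have cV: "card V > 0" using less.prems unfolding addclosed_def
          by (auto simp: card_gt_0_iff)
        have "card V < card V'" using V' p cV by simp
        moreover have "card V' \<le> CARD('a)" using card_mono[of "UNIV::'a set" V'] by simp
        ultimately have "CARD('a) - card V' < CARD('a) - card V" by simp
        from less.hyps[OF this V'(1)] obtain n where "CARD('a) = card V' * CHAR('a) ^ n" by blast
        thus ?thesis using V'(2) by (intro exI[of _ "Suc n"]) (simp add: algebra_simps)
      qed
    qed
  qed
  have "addclosed {0::'a}" by (simp add: addclosed_def)
  from main[OF this] show ?thesis by simp
qed



lemma exhaust_3':
  fixes x :: 3
  shows "x = 1 \<or> x = 2 \<or> x = 3"
proof (induct x)
  case (of_int z)
  then have "z = 0 \<or> z = 1 \<or> z = 2" by fastforce
  then show ?case by auto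
qed

lemma exhaust_5':
  fixes x :: 5
  shows "x = 1 \<or> x = 2 \<or> x = 3 \<or> x = 4 \<or> x = 5"
proof (induct x)
  case (of_int z)
  then have "z = 0 \<or> z = 1 \<or> z = 2 \<or> z = 3 \<or> z = 4" by fastforce
  then show ?case by auto
qed

lemma forall3: "(\<forall>i::3. P i) \<longleftrightarrow> P 1 \<and> P 2 \<and> P 3"
  by (metis exhaust_3')
lemma forall5: "(\<forall>i::5. P i) \<longleftrightarrow> P 1 \<and> P 2 \<and> P 3 \<and> P 4 \<and> P 5"
  by (metis exhaust_5')
lemma exists3: "(\<exists>i::3. P i) \<longleftrightarrow> P 1 \<or> P 2 \<or> P 3"
  by (metis exhaust_3')

lemma vec_eq3: "(v::'a^3) = w \<longleftrightarrow> v$1 = w$1 \<and> v$2 = w$2 \<and> v$3 = w$3"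
  by (simp add: vec_eq_iff forall3)
lemma vec_eq5: "(v::'a^5) = w \<longleftrightarrow> v$1 = w$1 \<and> v$2 = w$2 \<and> v$3 = w$3 \<and> v$4 = w$4 \<and> v$5 = w$5"
  by (simp add: vec_eq_iff forall5)

lemma UNIV3: "(UNIV::3 set) = {1,2,3}" using exhaust_3' by auto
lemma sum3: "sum f (UNIV::3 set) = f 1 + f 2 + f 3"
  unfolding UNIV3 by (simp add: ac_simps)

lemma mv3: "((M::'a::comm_semiring_1^3^'m) *v w) $ i = M$i$1 * w$1 + M$i$2 * w$2 + M$i$3 * w$3"
  by (simp add: matrix_vector_mult_def sum3)

locale fqf =
  fixes q :: nat and t :: "'k::{finite,field}"
  assumes card: "CARD('k) = q^2" and prim: "primitive_elt t"
begin

lemma card_ge2: "CARD('k) \<ge> 2"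
proof -
  have "card {0::'k, 1} \<le> CARD('k)" using card_mono[of "UNIV::'k set" "{0,1}"] by simp
  thus ?thesis by simp
qed

lemma q_ge2: "q \<ge> 2"
proof (rule ccontr)
  assume "\<not> q \<ge> 2"
  hence "q = 0 \<or> q = 1" by auto
  thus False using card card_ge2 by auto
qed

lemma q_pos: "q > 0" using q_ge2 by simp

lemma q_char: "\<exists>i. q = CHAR('k) ^ i"
proof -
  obtain n where n: "CARD('k) = CHAR('k) ^ n" using card_field_CHAR_power by blast
  have "q dvd CHAR('k) ^ n" using n card by (metis dvd_triv_left power2_eq_square)
  thus ?thesis using divides_primepow_nat[OF ff_CHAR_prime[where 'a='k]] by blast
qed

lemma fr_add: "((x::'k) + y) ^ q = x ^ q + y ^ q"
proof -
  obtain i where "q = CHAR('k) ^ i" using q_char by blast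
  thus ?thesis using freshmans_dream'[OF ff_CHAR_prime[where 'a='k]] by blast
qed

lemma fr_fr: "((x::'k) ^ q) ^ q = x"
  by (metis card ff_power_card power2_eq_square power_mult)

lemma fr_zero: "(0::'k) ^ q = 0" using q_pos by simp

lemma fr_minus: "(- (x::'k)) ^ q = - (x ^ q)"
proof -
  have "(x + - x) ^ q = x ^ q + (- x) ^ q" by (rule fr_add)
  hence "0 = x ^ q + (- x) ^ q" using fr_zero by simp
  thus ?thesis by (metis add_eq_0_iff)
qed

lemma fr_diff: "((x::'k) - y) ^ q = x ^ q - y ^ q"
  using fr_add[of x "- y"] fr_minus by simp

lemma fr_sum: "(sum f A :: 'k) ^ q = sum (\<lambda>i. f i ^ q) A"
  by (induction A rule: infinite_finite_induct) (auto simp: fr_zero fr_add)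

lemma Fq_iff: "x \<in> Fq q \<longleftrightarrow> x ^ q = x" by (simp add: Fq_def)

lemma Fq_0 [simp]: "(0::'k) \<in> Fq q" by (simp add: Fq_iff fr_zero)
lemma Fq_1 [simp]: "(1::'k) \<in> Fq q" by (simp add: Fq_iff)
lemma Fq_add [simp]: "x \<in> Fq q \<Longrightarrow> y \<in> Fq q \<Longrightarrow> (x::'k) + y \<in> Fq q" by (simp add: Fq_iff fr_add)
lemma Fq_diff [simp]: "x \<in> Fq q \<Longrightarrow> y \<in> Fq q \<Longrightarrow> (x::'k) - y \<in> Fq q" by (simp add: Fq_iff fr_diff)
lemma Fq_minus [simp]: "x \<in> Fq q \<Longrightarrow> - (x::'k) \<in> Fq q" by (simp add: Fq_iff fr_minus)
lemma Fq_mult [simp]: "x \<in> Fq q \<Longrightarrow> y \<in> Fq q \<Longrightarrow> (x::'k) * y \<in> Fq q" by (simp add: Fq_iff power_mult_distrib)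
lemma Fq_divide [simp]: "x \<in> Fq q \<Longrightarrow> y \<in> Fq q \<Longrightarrow> (x::'k) / y \<in> Fq q" by (simp add: Fq_iff power_divide)

lemma t_not_Fq: "t ^ q \<noteq> t"
proof
  assume tq: "t ^ q = t"
  have sub: "UNIV - {0} \<subseteq> (\<lambda>n. t ^ n) ` {..<q}"
  proof
    fix y :: 'k assume "y \<in> UNIV - {0}"
    then obtain n where n: "y = t ^ n" using prim unfolding primitive_elt_def by blast
    show "y \<in> (\<lambda>n. t ^ n) ` {..<q}"
    proof (cases "t = 0")
      case True
      have "n = 0"
      proof (rule ccontr)
        assume "n \<noteq> 0" hence "y = 0" using n True by simp
        thus False using \<open>y \<in> UNIV - {0}\<close> by simp
      qed
      hence "y = t ^ 0" using n by simp
      moreover have "(0::nat) \<in> {..<q}" using q_pos by simp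
      ultimately show ?thesis by (rule image_eqI)
    next
      case False
      have t1: "t ^ (q - 1) = 1"
      proof -
        have "t * t ^ (q - 1) = t ^ q" using q_pos by (simp add: power_eq_if[of t q])
        hence "t * t ^ (q - 1) = t * 1" using tq by simp
        thus ?thesis using False by simp
      qed
      have "t ^ n = t ^ ((q - 1) * (n div (q - 1)) + n mod (q - 1))" by (simp only: mult_div_mod_eq)
      also have "\<dots> = t ^ (n mod (q - 1))" by (simp only: power_add power_mult t1 power_one mult_1)
      finally have "y = t ^ (n mod (q - 1))" using n by simp
      moreover have "n mod (q - 1) < q - 1" using q_ge2 by (intro mod_less_divisor) simp
      hence "n mod (q - 1) < q" by simp
      ultimately show ?thesis by blast
    qed
  qed
  have "card (UNIV - {0::'k}) \<le> card ((\<lambda>n. t ^ n) ` {..<q})"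
    by (rule card_mono[OF _ sub]) simp
  also have "\<dots> \<le> q" using card_image_le[of "{..<q}" "\<lambda>n. t ^ n"] by simp
  finally have "CARD('k) - 1 \<le> q" by (simp add: card_Diff_singleton)
  hence "q ^ 2 \<le> q + 1" using card by simp
  moreover have "q ^ 2 \<ge> 2 * q" using q_ge2 by (simp add: power2_eq_square)
  ultimately show False using q_ge2 by simp
qed

lemma t_nz: "t \<noteq> 0" using t_not_Fq fr_zero by auto

lemma tq_tq: "(t ^ q) ^ q = t" by (rule fr_fr)

lemma t_sub_nz: "t - t ^ q \<noteq> 0" using t_not_Fq by simp

definition im :: "'k \<Rightarrow> 'k" where "im z = (z - z ^ q) / (t - t ^ q)"
definition re :: "'k \<Rightarrow> 'k" where "re z = z - im z * t"

lemma im_Fq [simp]: "im z \<in> Fq q"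
proof -
  have "(im z) ^ q = (z ^ q - z) / (t ^ q - t)"
    by (simp add: im_def power_divide fr_diff fr_fr)
  also have "\<dots> = im z" unfolding im_def
    by (metis minus_diff_eq minus_divide_divide)
  finally show ?thesis by (simp add: Fq_iff)
qed

lemma re_Fq [simp]: "re z \<in> Fq q"
proof -
  have "(re z) ^ q = z ^ q - im z * t ^ q"
    using im_Fq[of z] by (simp add: re_def fr_diff power_mult_distrib Fq_iff)
  also have "\<dots> = re z"
  proof -
    have "im z * (t - t ^ q) = z - z ^ q" unfolding im_def using t_sub_nz by simp
    thus ?thesis unfolding re_def by (simp add: algebra_simps)
  qed
  finally show ?thesis by (simp add: Fq_iff)
qed

lemma re_im: "re z + im z * t = z" by (simp add: re_def)

lemma decomp_unique:
  assumes "a \<in> Fq q" "b \<in> Fq q" "a' \<in> Fq q" "b' \<in> Fq q" "a + b * t = a' + b' * t"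
  shows "a = a' \<and> b = b'"
proof (cases "b = b'")
  case True then show ?thesis using assms by simp
next
  case False
  have "(b - b') * t = a' - a" using assms(5) by (simp add: algebra_simps)
  hence "t = (a' - a) / (b - b')" using False by (simp add: eq_divide_eq mult.commute)
  hence "t \<in> Fq q" using assms by simp
  thus ?thesis using t_not_Fq by (simp add: Fq_iff)
qed

end

context fqf begin

definition realv :: "'k ^ 'n \<Rightarrow> bool" where "realv v \<longleftrightarrow> (\<forall>i. v $ i \<in> Fq q)"

definition psi :: "'k ^ 5 \<Rightarrow> 'k ^ 3" where
  "psi v = (\<chi> i. if i = 1 then v$1 + v$2 * t^q else if i = 2 then v$3 + v$4 * t^q else v$5)"

lemma emb_c [simp]: "emb t v $ 1 = v$1 + v$2 * t" "emb t v $ 2 = v$3 + v$4 * t" "emb t v $ 3 = v$5"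
  by (simp_all add: emb_def)
lemma psi_c [simp]: "psi v $ 1 = v$1 + v$2 * t^q" "psi v $ 2 = v$3 + v$4 * t^q" "psi v $ 3 = v$5"
  by (simp_all add: psi_def)
lemma conjv_c [simp]: "conjv q v $ i = (v$i)^q" by (simp add: conjv_def)

lemma emb_add: "emb t (v + w) = emb t v + emb t w" by (simp add: vec_eq3 algebra_simps)
lemma emb_diff: "emb t (v - w) = emb t v - emb t w" by (simp add: vec_eq3 algebra_simps)
lemma emb_scale: "emb t (c *s v) = c *s emb t v" by (simp add: vec_eq3 algebra_simps)
lemma emb_zero [simp]: "emb t 0 = 0" by (simp add: vec_eq3)
lemma psi_add: "psi (v + w) = psi v + psi w" by (simp add: vec_eq3 algebra_simps)
lemma psi_diff: "psi (v - w) = psi v - psi w" by (simp add: vec_eq3 algebra_simps)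
lemma psi_scale: "psi (c *s v) = c *s psi v" by (simp add: vec_eq3 algebra_simps)
lemma psi_zero [simp]: "psi 0 = 0" by (simp add: vec_eq3)

lemma realv_add: "realv v \<Longrightarrow> realv w \<Longrightarrow> realv (v + w)" by (simp add: realv_def)
lemma realv_diff: "realv v \<Longrightarrow> realv w \<Longrightarrow> realv (v - w)" by (simp add: realv_def)
lemma realv_scale: "c \<in> Fq q \<Longrightarrow> realv v \<Longrightarrow> realv (c *s v)" by (simp add: realv_def)
lemma realv_zero [simp]: "realv 0" by (simp add: realv_def)
lemma realv_conj: "realv v \<longleftrightarrow> conjv q v = v" by (simp add: realv_def vec_eq_iff Fq_iff)

lemma conjv_add: "conjv q ((v::'k^'n) + w) = conjv q v + conjv q w" by (simp add: vec_eq_iff fr_add)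
lemma conjv_diff: "conjv q ((v::'k^'n) - w) = conjv q v - conjv q w" by (simp add: vec_eq_iff fr_diff)
lemma conjv_scale: "conjv q (c *s (v::'k^'n)) = c ^ q *s conjv q v" by (simp add: vec_eq_iff power_mult_distrib)
lemma conjv_conjv [simp]: "conjv q (conjv q (v::'k^'n)) = v" by (simp add: vec_eq_iff fr_fr)
lemma conjv_zero [simp]: "conjv q (0::'k^'n) = 0" by (simp add: vec_eq_iff fr_zero)
lemma conjv_eq_0_iff: "conjv q (v::'k^'n) = 0 \<longleftrightarrow> v = 0" by (metis conjv_conjv conjv_zero)

lemma emb_zero_real: assumes "realv v" "emb t v = 0" shows "v = 0"
proof -
  have r: "\<And>i. v$i \<in> Fq q" using assms(1) by (simp add: realv_def)
  have "v$1 + v$2 * t = 0 + 0 * t" "v$3 + v$4 * t = 0 + 0 * t" "v$5 = 0"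
    using assms(2) by (simp_all add: vec_eq3)
  hence "v$1 = 0 \<and> v$2 = 0" "v$3 = 0 \<and> v$4 = 0" "v$5 = 0"
    using decomp_unique r Fq_0 by blast+
  thus ?thesis by (simp add: vec_eq5)
qed

lemma emb_inj_real: "realv v \<Longrightarrow> realv w \<Longrightarrow> emb t v = emb t w \<Longrightarrow> v = w"
  using emb_zero_real[of "v - w"] by (simp add: realv_diff emb_diff)

lemma emb_psi_inj: assumes "emb t v = emb t w" "psi v = psi w" shows "v = w"
proof -
  have a: "v$1 + v$2 * t = w$1 + w$2 * t" "v$1 + v$2 * t^q = w$1 + w$2 * t^q"
          "v$3 + v$4 * t = w$3 + w$4 * t" "v$3 + v$4 * t^q = w$3 + w$4 * t^q" "v$5 = w$5"
    using assms by (simp_all add: vec_eq3)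
  have "v$2 * (t - t^q) = (v$1 + v$2 * t) - (v$1 + v$2 * t^q)" by (simp add: algebra_simps)
  also have "\<dots> = (w$1 + w$2 * t) - (w$1 + w$2 * t^q)" using a(1,2) by simp
  also have "\<dots> = w$2 * (t - t^q)" by (simp add: algebra_simps)
  finally have 2: "v$2 = w$2" using t_sub_nz by simp
  have "v$4 * (t - t^q) = (v$3 + v$4 * t) - (v$3 + v$4 * t^q)" by (simp add: algebra_simps)
  also have "\<dots> = (w$3 + w$4 * t) - (w$3 + w$4 * t^q)" using a(3,4) by simp
  also have "\<dots> = w$4 * (t - t^q)" by (simp add: algebra_simps)
  finally have 4: "v$4 = w$4" using t_sub_nz by simp
  show ?thesis using a 2 4 by (simp add: vec_eq5)
qed

lemma psi_real: "realv v \<Longrightarrow> psi v = conjv q (emb t v)"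
  by (simp add: realv_def vec_eq3 fr_add power_mult_distrib Fq_iff)

lemma emb_conj: "emb t (conjv q a) = conjv q (psi a)"
  by (simp add: vec_eq3 fr_add power_mult_distrib fr_fr)

lemma psi_conj: "psi (conjv q a) = conjv q (emb t a)"
  by (simp add: vec_eq3 fr_add power_mult_distrib)

lemma sq_fr: "((x::'k) ^ 2) ^ q = (x ^ q) ^ 2"
  by (metis power_mult mult.commute)

lemma qf3_scale: "qf3 F (c *s w) = c ^ 2 * qf3 F w"
  by (cases F) (simp add: qf3_def power_mult_distrib algebra_simps power2_eq_square)

lemma qf3_conj: fixes F :: "'k qform" assumes "qf_over (Fq q) F" shows "qf3 F (conjv q w) = (qf3 F w) ^ q"
proof -
  obtain a b c f g h where F: "F = (a, b, c, f, g, h)" by (cases F)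
  have "a ^ q = a" "b ^ q = b" "c ^ q = c" "f ^ q = f" "g ^ q = g" "h ^ q = h"
    using assms F by (simp_all add: Fq_iff)
  thus ?thesis using F by (simp add: qf3_def fr_add power_mult_distrib sq_fr)
qed

end


lemma lspan_induct:
  assumes v: "v \<in> lspan K S" and P0: "Pr 0"
    and Padd: "\<And>x y. Pr x \<Longrightarrow> Pr y \<Longrightarrow> Pr (x + y)"
    and Pscale: "\<And>c x. c \<in> K \<Longrightarrow> Pr x \<Longrightarrow> Pr (c *s x)"
    and PS: "\<And>s. s \<in> S \<Longrightarrow> Pr s"
  shows "Pr v"
proof -
  obtain F c where F: "finite F" "F \<subseteq> S" "\<forall>s\<in>F. c s \<in> K" and vs: "v = (\<Sum>s\<in>F. c s *s s)"
    using v unfolding lspan_def by blast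
  have "F \<subseteq> S \<longrightarrow> (\<forall>s\<in>F. c s \<in> K) \<longrightarrow> Pr (\<Sum>s\<in>F. c s *s s)"
    using F(1)
  proof (induction F rule: finite_induct)
    case empty then show ?case using P0 by simp
  next
    case (insert x F) then show ?case using Padd Pscale PS by auto
  qed
  thus ?thesis using F vs by blast
qed

lemma lspan_base: "s \<in> S \<Longrightarrow> 1 \<in> K \<Longrightarrow> s \<in> lspan K S"
  unfolding lspan_def by (rule CollectI, rule exI[of _ "{s}"], rule exI[of _ "\<lambda>_. 1"]) simp

lemma lspan_two:
  assumes "s1 \<in> S" "s2 \<in> S" "s1 \<noteq> s2" "a \<in> K" "b \<in> K"
  shows "a *s s1 + b *s s2 \<in> lspan K S"
  unfolding lspan_def
  by (rule CollectI, rule exI[of _ "{s1, s2}"], rule exI[of _ "\<lambda>s. if s = s1 then a else b"])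
     (use assms in auto)

lemma pcone_iff: "Y \<in> pcone UNIV X \<longleftrightarrow> (\<exists>c. c \<noteq> 0 \<and> Y = c *s X)"
  by (auto simp: pcone_def)

lemma pcone_scale:
  fixes X :: "'a::field ^ 'n"
  assumes "d \<noteq> 0" shows "pcone UNIV (d *s X) = pcone UNIV X"
proof
  show "pcone UNIV (d *s X) \<subseteq> pcone UNIV X"
  proof
    fix Y assume "Y \<in> pcone UNIV (d *s X)"
    then obtain c where c: "c \<noteq> 0" "Y = c *s (d *s X)" by (auto simp: pcone_iff)
    hence "Y = (c * d) *s X" by (simp add: vector_smult_assoc)
    moreover have "c * d \<noteq> 0" using c assms by simp
    ultimately show "Y \<in> pcone UNIV X" unfolding pcone_iff by blast
  qed
  show "pcone UNIV X \<subseteq> pcone UNIV (d *s X)"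
  proof
    fix Y assume "Y \<in> pcone UNIV X"
    then obtain c where c: "c \<noteq> 0" "Y = c *s X" by (auto simp: pcone_iff)
    hence "Y = (c / d) *s (d *s X)" using assms by (simp add: vector_smult_assoc)
    moreover have "c / d \<noteq> 0" using c assms by simp
    ultimately show "Y \<in> pcone UNIV (d *s X)" unfolding pcone_iff by blast
  qed
qed

definition vec3 :: "'a \<Rightarrow> 'a \<Rightarrow> 'a \<Rightarrow> 'a ^ 3" where
  "vec3 a b c = (\<chi> i. if i = 1 then a else if i = 2 then b else c)"
lemma vec3_c [simp]: "vec3 a b c $ 1 = a" "vec3 a b c $ 2 = b" "vec3 a b c $ 3 = c"
  by (simp_all add: vec3_def)
definition vec5 :: "'a \<Rightarrow> 'a \<Rightarrow> 'a \<Rightarrow> 'a \<Rightarrow> 'a \<Rightarrow> 'a ^ 5" where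
  "vec5 a b c d e = (\<chi> i. if i = 1 then a else if i = 2 then b else if i = 3 then c else if i = 4 then d else e)"
lemma vec5_c [simp]: "vec5 a b c d e $ 1 = a" "vec5 a b c d e $ 2 = b" "vec5 a b c d e $ 3 = c"
   "vec5 a b c d e $ 4 = d" "vec5 a b c d e $ 5 = e"
  by (simp_all add: vec5_def)

lemma vec3_eta: "vec3 (w$1) (w$2) (w$3) = w" by (simp add: vec_eq3)
lemma vec3_eq0: "vec3 a b c = (0::'a::zero^3) \<longleftrightarrow> (a, b, c) = (0, 0, 0)" by (simp add: vec_eq3)

lemma cross_prop:
  fixes w1 w2 :: "'a::field ^ 3"
  assumes "w1 \<noteq> 0"
    "w1$2 * w2$3 - w1$3 * w2$2 = 0" "w1$3 * w2$1 - w1$1 * w2$3 = 0" "w1$1 * w2$2 - w1$2 * w2$1 = 0"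
  shows "\<exists>s. w2 = s *s w1"
proof -
  have "w1$1 \<noteq> 0 \<or> w1$2 \<noteq> 0 \<or> w1$3 \<noteq> 0" using assms(1) by (auto simp: vec_eq3)
  moreover
  { assume h: "w1$1 \<noteq> 0"
    have "w2 = (w2$1 / w1$1) *s w1" using h assms(2-4)
      by (simp add: vec_eq3 field_simps; simp add: algebra_simps)
    hence ?thesis by blast }
  moreover
  { assume h: "w1$2 \<noteq> 0"
    have "w2 = (w2$2 / w1$2) *s w1" using h assms(2-4)
      by (simp add: vec_eq3 field_simps; simp add: algebra_simps)
    hence ?thesis by blast }
  moreover
  { assume h: "w1$3 \<noteq> 0"
    have "w2 = (w2$3 / w1$3) *s w1" using h assms(2-4)
      by (simp add: vec_eq3 field_simps; simp add: algebra_simps)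
    hence ?thesis by blast }
  ultimately show ?thesis by blast
qed

locale bbs = fqf q t for q :: nat and t :: "'k::{finite,field}" +
  fixes M :: "'k^3^3" and F :: "'k qform" and P Q :: "'k^3"
  assumes M: "invertible M" and secant: "baer_secant q M"
    and Fo: "qf_over (Fq q) F" and Fnd: "nondeg_qf F"
    and P: "P \<noteq> 0" "P$3 = 0" and Q: "Q \<noteq> 0" "Q$3 = 0"
    and meet: "{X \<in> Cplus_pts M F. X $ 3 = 0} = pcone UNIV P \<union> pcone UNIV Q"
begin

definition Mi :: "'k^3^3" where "Mi = matrix_inv M"

lemma M_Mi: "M ** Mi = mat 1 \<and> Mi ** M = mat 1"
  using M unfolding invertible_def Mi_def matrix_inv_def by (rule someI_ex)

lemma Mi_M_v [simp]: "Mi *v (M *v w) = w"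
  using M_Mi by (metis matrix_vector_mul_assoc matrix_vector_mul_lid)
lemma M_Mi_v [simp]: "M *v (Mi *v X) = X"
  using M_Mi by (metis matrix_vector_mul_assoc matrix_vector_mul_lid)
lemma M_inj: "M *v w = M *v w' \<Longrightarrow> w = w'" by (metis Mi_M_v)
lemma M_zero: "M *v w = 0 \<longleftrightarrow> w = 0"
  by (metis M_inj matrix_vector_mult_0_right)
lemma M_scale: "M *v (c *s w) = c *s (M *v w)" by (rule vector_scalar_commute)
lemma Mi_scale: "Mi *v (c *s w) = c *s (Mi *v w)" by (rule vector_scalar_commute)

lemma Cplus_iff: "X \<in> Cplus_pts M F \<longleftrightarrow> X \<noteq> 0 \<and> qf3 F (Mi *v X) = 0"
proof
  assume "X \<in> Cplus_pts M F"
  then obtain w where "X = M *v w" "w \<noteq> 0" "qf3 F w = 0" unfolding Cplus_pts_def by blast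
  thus "X \<noteq> 0 \<and> qf3 F (Mi *v X) = 0" using M_zero by simp
next
  assume h: "X \<noteq> 0 \<and> qf3 F (Mi *v X) = 0"
  have "Mi *v X \<noteq> 0" using h by (metis M_Mi_v matrix_vector_mult_0_right)
  thus "X \<in> Cplus_pts M F" unfolding Cplus_pts_def using h
    by (intro CollectI exI[of _ "Mi *v X"]) simp
qed

lemma meet_iff: "X \<noteq> 0 \<and> X$3 = 0 \<and> qf3 F (Mi *v X) = 0 \<longleftrightarrow> X \<in> pcone UNIV P \<union> pcone UNIV Q"
  using meet Cplus_iff by blast

lemma row3_exists: "\<exists>lam n. lam \<noteq> 0 \<and> realv n \<and> n \<noteq> 0 \<and> (\<forall>j. M$3$j = lam * n$j)"
proof -
  obtain X Y where XY: "X \<in> baer_pts q M" "Y \<in> baer_pts q M" "X $ 3 = 0" "Y $ 3 = 0"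
       "pcone UNIV X \<noteq> pcone UNIV Y"
    using secant unfolding baer_secant_def by blast
  obtain c1 w1 where X: "X = c1 *s (M *v w1)" "c1 \<noteq> 0" "w1 \<noteq> 0" "\<forall>i. w1 $ i \<in> Fq q"
    using XY(1) unfolding baer_pts_def by blast
  obtain c2 w2 where Y: "Y = c2 *s (M *v w2)" "c2 \<noteq> 0" "w2 \<noteq> 0" "\<forall>i. w2 $ i \<in> Fq q"
    using XY(2) unfolding baer_pts_def by blast
  define m where "m = M $ 3"
  have m1: "m$1 * w1$1 + m$2 * w1$2 + m$3 * w1$3 = 0"
    using XY(3) X(1,2) by (simp add: m_def mv3)
  have m2: "m$1 * w2$1 + m$2 * w2$2 + m$3 * w2$3 = 0"
    using XY(4) Y(1,2) by (simp add: m_def mv3)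
  define n where "n = vec3 (w1$2 * w2$3 - w1$3 * w2$2) (w1$3 * w2$1 - w1$1 * w2$3) (w1$1 * w2$2 - w1$2 * w2$1)"
  have nreal: "realv n" using X(4) Y(4) unfolding realv_def n_def by (subst forall3) simp
  have nnz: "n \<noteq> 0"
  proof
    assume "n = 0"
    hence "w1$2 * w2$3 - w1$3 * w2$2 = 0" "w1$3 * w2$1 - w1$1 * w2$3 = 0" "w1$1 * w2$2 - w1$2 * w2$1 = 0"
      unfolding n_def by (simp_all add: vec_eq3)
    then obtain s where s: "w2 = s *s w1" using cross_prop X(3) by blast
    have "s \<noteq> 0" using s Y(3) by auto
    have "Y = (c2 * s / c1) *s X" using X Y s by (simp add: M_scale vector_smult_assoc)
    moreover have "c2 * s / c1 \<noteq> 0" using \<open>s \<noteq> 0\<close> X(2) Y(2) by simp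
    ultimately have "pcone UNIV Y = pcone UNIV X" using pcone_scale by metis
    thus False using XY(5) by simp
  qed
  have key: "\<And>i j. m$j * n$i = m$i * n$j"
  proof -
    fix i j :: 3
    have a: "m$1 * n$2 = m$2 * n$1" "m$1 * n$3 = m$3 * n$1" "m$2 * n$3 = m$3 * n$2"
    proof -
      have "m$1 * n$2 - m$2 * n$1 = w1$3 * (m$1 * w2$1 + m$2 * w2$2 + m$3 * w2$3) - w2$3 * (m$1 * w1$1 + m$2 * w1$2 + m$3 * w1$3)"
        unfolding n_def by (simp add: algebra_simps)
      thus "m$1 * n$2 = m$2 * n$1" using m1 m2 by simp
      have "m$1 * n$3 - m$3 * n$1 = w2$2 * (m$1 * w1$1 + m$2 * w1$2 + m$3 * w1$3) - w1$2 * (m$1 * w2$1 + m$2 * w2$2 + m$3 * w2$3)"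
        unfolding n_def by (simp add: algebra_simps)
      thus "m$1 * n$3 = m$3 * n$1" using m1 m2 by simp
      have "m$2 * n$3 - m$3 * n$2 = w1$1 * (m$1 * w2$1 + m$2 * w2$2 + m$3 * w2$3) - w2$1 * (m$1 * w1$1 + m$2 * w1$2 + m$3 * w1$3)"
        unfolding n_def by (simp add: algebra_simps)
      thus "m$2 * n$3 = m$3 * n$2" using m1 m2 by simp
    qed
    show "m$j * n$i = m$i * n$j"
      using exhaust_3'[of i] exhaust_3'[of j] a by (auto simp: mult.commute)
  qed
  obtain i where i: "n$i \<noteq> 0" using nnz by (auto simp: vec_eq_iff)
  define lam where "lam = m$i / n$i"
  have row: "\<forall>j. M$3$j = lam * n$j"
  proof
    fix j show "M$3$j = lam * n$j" using key[of i j] i unfolding lam_def m_def[symmetric]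
      by (simp add: field_simps)
  qed
  have "lam \<noteq> 0"
  proof
    assume "lam = 0"
    hence "\<And>w. (M *v w)$3 = 0" using row by (simp add: mv3)
    hence "(M *v (Mi *v vec3 0 0 1))$3 = 0" by blast
    thus False by simp
  qed
  thus ?thesis using nreal nnz row by blast
qed

end


locale bbs2 = bbs q t M F P Q for q :: nat and t :: "'k::{finite,field}" and M F P Q +
  fixes lam :: 'k and n :: "'k^3"
  assumes lam: "lam \<noteq> 0" and n_real: "realv n" and n_nz: "n \<noteq> 0"
    and row3: "\<And>j. M$3$j = lam * n$j"
begin

definition nd :: "'k^3 \<Rightarrow> 'k" where "nd w = n$1 * w$1 + n$2 * w$2 + n$3 * w$3"
definition A :: "'k^3^3" where "A = (\<chi> i j. M$i$j / lam)"
definition winv :: "'k^3 \<Rightarrow> 'k^3" where "winv X = lam *s (Mi *v X)"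
definition u :: "3 \<Rightarrow> 'k^5" where
  "u j = vec5 (re (A$1$j)) (im (A$1$j)) (re (A$2$j)) (im (A$2$j)) (n$j)"
definition Lm :: "'k^3 \<Rightarrow> 'k^5" where "Lm w = w$1 *s u 1 + w$2 *s u 2 + w$3 *s u 3"
definition cA :: "'k^3^3" where "cA = (\<chi> i j. (A$i$j) ^ q)"

lemma n_Fq [simp]: "n$i \<in> Fq q" using n_real by (simp add: realv_def)

lemma M3: "(M *v w)$3 = lam * nd w" by (simp add: mv3 row3 nd_def algebra_simps)
lemma A3: "A$3$j = n$j" by (simp add: A_def row3 lam)
lemma MA: "M *v w = lam *s (A *v w)"
  by (simp add: vec_eq3 mv3 A_def lam field_simps)
lemma Av: "A *v w = (1/lam) *s (M *v w)"
  by (simp add: MA vector_smult_assoc lam)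
lemma Av3: "(A *v w)$3 = nd w" by (simp add: mv3 A3 nd_def)
lemma A_scale: "A *v (c *s w) = c *s (A *v w)" by (rule vector_scalar_commute)
lemma A_add: "A *v (w + w') = A *v w + A *v w'" by (rule matrix_vector_right_distrib)
lemma winv_A [simp]: "winv (A *v w) = w"
  by (simp add: winv_def Av Mi_scale vector_smult_assoc lam)
lemma A_winv [simp]: "A *v winv X = X"
  by (simp add: winv_def Av M_scale vector_smult_assoc lam)
lemma A_inj: "A *v w = A *v w' \<Longrightarrow> w = w'" by (metis winv_A)
lemma A_zero: "A *v w = 0 \<longleftrightarrow> w = 0" by (metis A_inj matrix_vector_mult_0_right)
lemma winv_add: "winv (X + Y) = winv X + winv Y"
  by (simp add: winv_def matrix_vector_right_distrib vec_eq_iff algebra_simps)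
lemma winv_scale: "winv (c *s X) = c *s winv X"
  by (simp add: winv_def Mi_scale vector_smult_assoc mult.commute)
lemma winv_zero [simp]: "winv 0 = 0" by (simp add: winv_def)

lemma u_real: "realv (u j)"
  unfolding realv_def u_def by (subst forall5) simp

lemma emb_u: "emb t (u j) = vec3 (A$1$j) (A$2$j) (A$3$j)"
  by (simp add: vec_eq3 u_def re_im A3)

lemma emb_Lm: "emb t (Lm w) = A *v w"
  by (simp add: Lm_def emb_add emb_scale emb_u vec_eq3 mv3 algebra_simps)

lemma psi_u: "psi (u j) = vec3 ((A$1$j)^q) ((A$2$j)^q) ((A$3$j)^q)"
  using psi_real[OF u_real] by (simp add: emb_u vec_eq3)

lemma psi_Lm: "psi (Lm w) = cA *v w"
  by (simp add: Lm_def psi_add psi_scale psi_u vec_eq3 mv3 cA_def algebra_simps)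

lemma cA_conj: "cA *v w = conjv q (A *v conjv q w)"
  by (simp add: vec_eq3 mv3 cA_def fr_add power_mult_distrib fr_fr)

lemma Lm_real: "realv w \<Longrightarrow> realv (Lm w)"
  unfolding Lm_def by (intro realv_add realv_scale u_real) (auto simp: realv_def)

lemma Lm_scale: "Lm (c *s w) = c *s Lm w"
  by (simp add: Lm_def vec_eq_iff algebra_simps)
lemma Lm_add: "Lm (w + w') = Lm w + Lm w'"
  by (simp add: Lm_def vec_eq_iff algebra_simps)
lemma Lm_zero_iff: "Lm w = 0 \<longleftrightarrow> w = 0"
proof
  assume "Lm w = 0"
  hence "A *v w = 0" using emb_Lm[of w] by simp
  thus "w = 0" using A_zero by simp
qed (simp add: Lm_def)
lemma Lm_vec3: "a *s u 1 + b *s u 2 + c *s u 3 = Lm (vec3 a b c)"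
  by (simp add: Lm_def)
lemma Lm_winv: "realv v \<Longrightarrow> realv (winv (emb t v)) \<Longrightarrow> Lm (winv (emb t v)) = v"
  by (rule emb_inj_real) (simp_all add: Lm_real emb_Lm)

lemma nd_Fq: "realv w \<Longrightarrow> nd w \<in> Fq q" by (simp add: nd_def realv_def)
lemma nd_conj: "nd (conjv q w) = (nd w) ^ q"
  using n_Fq by (simp add: nd_def fr_add power_mult_distrib Fq_iff)
lemma nd_add: "nd (w + w') = nd w + nd w'" by (simp add: nd_def algebra_simps)
lemma nd_scale: "nd (c *s w) = c * nd w" by (simp add: nd_def algebra_simps)

lemma real5_iff: "v \<in> real5 q \<longleftrightarrow> v \<noteq> 0 \<and> realv v" by (simp add: real5_def realv_def)
lemma bb_mem: "v \<in> bb q t X \<longleftrightarrow> v \<noteq> 0 \<and> realv v \<and> (\<exists>c. c \<noteq> 0 \<and> emb t v = c *s X)"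
  by (auto simp: bb_def real5_iff pcone_iff)

lemma vsa: "a *s (b *s x) = (a * b) *s (x :: 'k ^ 'nn)" by (rule vector_smult_assoc)

definition G :: "('k^5) set" where "G = \<Union>{bb q t X | X. X \<in> baer_pts q M \<and> X $ 3 \<noteq> 0}"

lemma bb_baer_G: "bb_baer q t M = lspan (Fq q) G - {0}"
  by (simp add: bb_baer_def G_def)

lemma baer_ptsE:
  assumes "X \<in> baer_pts q M"
  obtains c w where "X = c *s (M *v w)" "c \<noteq> 0" "w \<noteq> 0" "realv w"
  using assms unfolding baer_pts_def realv_def by blast

lemma G_char: assumes "s \<in> G" shows "realv s \<and> realv (winv (emb t s))"
proof -
  obtain X where X: "X \<in> baer_pts q M" "X$3 \<noteq> 0" "s \<in> bb q t X" using assms unfolding G_def by blast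
  obtain c w where cw: "X = c *s (M *v w)" "c \<noteq> 0" "w \<noteq> 0" "realv w" using X(1) by (rule baer_ptsE)
  obtain d where d: "d \<noteq> 0" "emb t s = d *s X" "realv s" "s \<noteq> 0" using X(3) by (auto simp: bb_mem)
  have es: "emb t s = (d * c * lam) *s (A *v w)" using d cw by (simp add: MA vsa)
  have X3: "X$3 = c * lam * nd w" using cw by (simp add: M3)
  hence ndnz: "nd w \<noteq> 0" using X(2) by auto
  have "(emb t s)$3 = ((d * c * lam) *s (A *v w))$3" using es by simp
  hence "s$5 = (d * c * lam) * nd w" by (simp add: Av3)
  hence "d * c * lam = s$5 / nd w" using ndnz by simp
  moreover have "s$5 \<in> Fq q" using d(3) by (simp add: realv_def)
  ultimately have eF: "d * c * lam \<in> Fq q" using nd_Fq[OF cw(4)] by simp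
  have "winv (emb t s) = (d * c * lam) *s w" using es by (simp add: winv_scale)
  thus ?thesis using d(3) realv_scale[OF eF cw(4)] by simp
qed

lemma Lm_in_G: assumes "realv w" "w \<noteq> 0" "nd w \<noteq> 0" shows "Lm w \<in> G"
proof -
  have X: "M *v w \<in> baer_pts q M" unfolding baer_pts_def
    using assms(1,2) by (intro CollectI exI[of _ 1] exI[of _ w]) (simp add: realv_def)
  have X3: "(M *v w)$3 \<noteq> 0" using assms(3) lam by (simp add: M3)
  have "emb t (Lm w) = (1/lam) *s (M *v w)" by (simp add: emb_Lm Av)
  moreover have "1 / lam \<noteq> 0" using lam by simp
  moreover have "Lm w \<noteq> 0" "realv (Lm w)" using assms Lm_real Lm_zero_iff by auto
  ultimately have "Lm w \<in> bb q t (M *v w)" unfolding bb_mem by blast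
  thus ?thesis unfolding G_def using X X3 by blast
qed

lemma exists_w0: "\<exists>w0. realv w0 \<and> nd w0 \<noteq> 0"
proof -
  have "n$1 \<noteq> 0 \<or> n$2 \<noteq> 0 \<or> n$3 \<noteq> 0" using n_nz by (auto simp: vec_eq3)
  moreover have "realv (vec3 1 0 0)" "realv (vec3 0 1 0)" "realv (vec3 0 0 (1::'k))"
    unfolding realv_def by (subst forall3, simp)+
  ultimately show ?thesis by (auto simp: nd_def)
qed

definition PL :: "('k^5) set" where "PL = {Lm w | w. realv w \<and> w \<noteq> 0}"
definition CON :: "('k^5) set" where "CON = {Lm w | w. realv w \<and> w \<noteq> 0 \<and> qf3 F w = 0}"

lemma bb_baer_char: "bb_baer q t M = PL"
proof
  show "bb_baer q t M \<subseteq> PL"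
  proof
    fix v assume "v \<in> bb_baer q t M"
    hence v: "v \<in> lspan (Fq q) G" "v \<noteq> 0" by (auto simp: bb_baer_G)
    have "realv v \<and> realv (winv (emb t v))"
      using v(1)
    proof (rule lspan_induct)
      show "realv 0 \<and> realv (winv (emb t 0))" by simp
    next
      fix x y :: "'k^5" assume "realv x \<and> realv (winv (emb t x))" "realv y \<and> realv (winv (emb t y))"
      thus "realv (x + y) \<and> realv (winv (emb t (x + y)))" by (simp add: realv_add emb_add winv_add)
    next
      fix c :: 'k and x :: "'k^5" assume "c \<in> Fq q" "realv x \<and> realv (winv (emb t x))"
      thus "realv (c *s x) \<and> realv (winv (emb t (c *s x)))" by (simp add: realv_scale emb_scale winv_scale)
    next
      fix s assume "s \<in> G" thus "realv s \<and> realv (winv (emb t s))" by (rule G_char)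
    qed
    hence "v = Lm (winv (emb t v))" using Lm_winv by simp
    moreover have "winv (emb t v) \<noteq> 0" using \<open>v = Lm (winv (emb t v))\<close> v(2) by (metis Lm_zero_iff)
    ultimately show "v \<in> PL" unfolding PL_def using \<open>realv v \<and> realv (winv (emb t v))\<close> by blast
  qed
next
  show "PL \<subseteq> bb_baer q t M"
  proof
    fix v assume "v \<in> PL"
    then obtain w where w: "v = Lm w" "realv w" "w \<noteq> 0" unfolding PL_def by blast
    have vnz: "v \<noteq> 0" using w Lm_zero_iff by simp
    obtain w0 where w0: "realv w0" "nd w0 \<noteq> 0" using exists_w0 by blast
    have "v \<in> lspan (Fq q) G"
    proof (cases "nd w = 0")
      case False
      hence "v \<in> G" using w Lm_in_G by simp
      thus ?thesis by (rule lspan_base) simp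
    next
      case True
      have w0nz: "w0 \<noteq> 0" using w0(2) by (auto simp: nd_def)
      have nd1: "nd (w + w0) \<noteq> 0" using True w0(2) by (simp add: nd_add)
      hence nz1: "w + w0 \<noteq> 0" by (metis nd_scale mult_zero_left vector_smult_lzero)
      have g1: "Lm (w + w0) \<in> G" using nd1 nz1 w(2) w0(1) by (intro Lm_in_G) (simp_all add: realv_add)
      have g2: "Lm w0 \<in> G" using w0 w0nz by (intro Lm_in_G)
      have ne: "Lm (w + w0) \<noteq> Lm w0" using w(3) Lm_zero_iff by (simp add: Lm_add)
      have "1 *s Lm (w + w0) + (-1) *s Lm w0 \<in> lspan (Fq q) G"
        by (rule lspan_two[OF g1 g2 ne]) simp_all
      moreover have "1 *s Lm (w + w0) + (-1) *s Lm w0 = v" using w(1) by (simp add: Lm_add vec_eq_iff)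
      ultimately show ?thesis by simp
    qed
    thus "v \<in> bb_baer q t M" using vnz by (simp add: bb_baer_G)
  qed
qed

end

context bbs2 begin

lemma Fq_conic_sub: "Fq_conic_pts q M F \<subseteq> baer_pts q M"
  unfolding Fq_conic_pts_def baer_pts_def by blast

lemma Fq_conicE:
  assumes "X \<in> Fq_conic_pts q M F"
  obtains c w where "X = c *s (M *v w)" "c \<noteq> 0" "w \<noteq> 0" "realv w" "qf3 F w = 0"
  using assms unfolding Fq_conic_pts_def realv_def by blast

lemma Lm_bb_pcone:
  assumes "realv w" "w \<noteq> 0" "M *v w \<in> pcone UNIV R" shows "Lm w \<in> bb q t R"
proof -
  obtain c where c: "c \<noteq> 0" "M *v w = c *s R" using assms(3) by (auto simp: pcone_iff)
  have "emb t (Lm w) = (c / lam) *s R" by (simp add: emb_Lm Av c vsa)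
  moreover have "c / lam \<noteq> 0" using c lam by simp
  moreover have "Lm w \<noteq> 0" "realv (Lm w)" using assms Lm_real Lm_zero_iff by auto
  ultimately show ?thesis unfolding bb_mem by blast
qed

lemma Mw_pcone: "M *v w \<in> pcone UNIV (M *v w)"
  by (auto simp: pcone_iff intro!: exI[of _ 1])

lemma bbX_CON:
  assumes "X \<in> Fq_conic_pts q M F" "v \<in> bb q t X" "v \<in> PL" shows "v \<in> CON"
proof -
  obtain c w where cw: "X = c *s (M *v w)" "c \<noteq> 0" "w \<noteq> 0" "realv w" "qf3 F w = 0"
    using assms(1) by (rule Fq_conicE)
  obtain w' where w': "v = Lm w'" "realv w'" "w' \<noteq> 0" using assms(3) unfolding PL_def by blast
  obtain d where d: "d \<noteq> 0" "emb t v = d *s X" using assms(2) by (auto simp: bb_mem)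
  have "A *v w' = A *v ((d * c * lam) *s w)"
    using d(2) w'(1) cw(1) by (simp add: emb_Lm MA A_scale vsa)
  hence "w' = (d * c * lam) *s w" by (rule A_inj)
  hence "qf3 F w' = 0" using cw(5) by (simp add: qf3_scale)
  thus ?thesis unfolding CON_def using w' by blast
qed

lemma affine_PL:
  assumes "X \<in> baer_pts q M" "X$3 \<noteq> 0" "v \<in> bb q t X" shows "v \<in> PL"
proof -
  have "v \<in> G" unfolding G_def using assms by blast
  hence "v \<in> lspan (Fq q) G" by (rule lspan_base) simp
  moreover have "v \<noteq> 0" using assms(3) by (simp add: bb_mem)
  ultimately show ?thesis using bb_baer_char bb_baer_G by auto
qed

lemma CON_char: "bb_sub q t M (Fq_conic_pts q M F) = CON"
proof
  show "bb_sub q t M (Fq_conic_pts q M F) \<subseteq> CON"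
  proof
    fix v assume "v \<in> bb_sub q t M (Fq_conic_pts q M F)"
    then consider (aff) X where "X \<in> Fq_conic_pts q M F" "X$3 \<noteq> 0" "v \<in> bb q t X"
      | (inf) T where "T \<in> Fq_conic_pts q M F" "T$3 = 0" "v \<in> bb q t T" "v \<in> bb_baer q t M"
      unfolding bb_sub_def by blast
    then show "v \<in> CON"
    proof cases
      case aff
      hence "v \<in> PL" using affine_PL Fq_conic_sub by blast
      thus ?thesis using bbX_CON aff by blast
    next
      case inf
      thus ?thesis using bbX_CON bb_baer_char by blast
    qed
  qed
next
  show "CON \<subseteq> bb_sub q t M (Fq_conic_pts q M F)"
  proof
    fix v assume "v \<in> CON"
    then obtain w where w: "v = Lm w" "realv w" "w \<noteq> 0" "qf3 F w = 0" unfolding CON_def by blast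
    have XC: "M *v w \<in> Fq_conic_pts q M F" unfolding Fq_conic_pts_def
      using w by (intro CollectI exI[of _ 1] exI[of _ w]) (simp add: realv_def)
    have vb: "v \<in> bb q t (M *v w)" using w Lm_bb_pcone Mw_pcone by simp
    have vP: "v \<in> bb_baer q t M" using w bb_baer_char unfolding PL_def by blast
    show "v \<in> bb_sub q t M (Fq_conic_pts q M F)"
    proof (cases "(M *v w)$3 = 0")
      case True then show ?thesis unfolding bb_sub_def using XC vb vP by blast
    next
      case False then show ?thesis unfolding bb_sub_def using XC vb by blast
    qed
  qed
qed

lemma conic_on_char:
  "conic_on K (u 1) (u 2) (u 3) F = {Lm w | w. (\<forall>i. w$i \<in> K) \<and> w \<noteq> 0 \<and> qf3 F w = 0}"
proof (rule set_eqI, rule iffI)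
  fix x assume "x \<in> conic_on K (u 1) (u 2) (u 3) F"
  then obtain a b c where abc: "x = a *s u 1 + b *s u 2 + c *s u 3" "a \<in> K" "b \<in> K" "c \<in> K"
    "(a, b, c) \<noteq> (0, 0, 0)" "qf F a b c = 0" unfolding conic_on_def by blast
  have "x = Lm (vec3 a b c)" using abc(1) Lm_vec3 by simp
  moreover have "\<forall>i. vec3 a b c $ i \<in> K" using abc by (subst forall3) simp
  moreover have "vec3 a b c \<noteq> 0" using abc(5) vec3_eq0 by metis
  moreover have "qf3 F (vec3 a b c) = 0" using abc(6) by (simp add: qf3_def)
  ultimately show "x \<in> {Lm w | w. (\<forall>i. w$i \<in> K) \<and> w \<noteq> 0 \<and> qf3 F w = 0}" by blast
next
  fix x assume "x \<in> {Lm w | w. (\<forall>i. w$i \<in> K) \<and> w \<noteq> 0 \<and> qf3 F w = 0}"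
  then obtain w where w: "x = Lm w" "\<forall>i. w$i \<in> K" "w \<noteq> 0" "qf3 F w = 0" by blast
  have "x = w$1 *s u 1 + w$2 *s u 2 + w$3 *s u 3" using w(1) by (simp add: Lm_def)
  moreover have "(w$1, w$2, w$3) \<noteq> (0, 0, 0)" using w(3) by (simp add: vec_eq3)
  moreover have "qf F (w$1) (w$2) (w$3) = 0" using w(4) by (simp add: qf3_def)
  ultimately show "x \<in> conic_on K (u 1) (u 2) (u 3) F" unfolding conic_on_def using w(2) by blast
qed

lemma plane_char: "plane_pts q (u 1) (u 2) (u 3) = PL"
proof (rule set_eqI, rule iffI)
  fix x assume "x \<in> plane_pts q (u 1) (u 2) (u 3)"
  then obtain a b c where abc: "x = a *s u 1 + b *s u 2 + c *s u 3" "a \<in> Fq q" "b \<in> Fq q" "c \<in> Fq q"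
    "(a, b, c) \<noteq> (0, 0, 0)" unfolding plane_pts_def by blast
  have "x = Lm (vec3 a b c)" using abc(1) Lm_vec3 by simp
  moreover have "realv (vec3 a b c)" using abc unfolding realv_def by (subst forall3) simp
  moreover have "vec3 a b c \<noteq> 0" using abc(5) vec3_eq0 by metis
  ultimately show "x \<in> PL" unfolding PL_def by blast
next
  fix x assume "x \<in> PL"
  then obtain w where w: "x = Lm w" "realv w" "w \<noteq> 0" unfolding PL_def by blast
  have "x = w$1 *s u 1 + w$2 *s u 2 + w$3 *s u 3" using w(1) by (simp add: Lm_def)
  moreover have "(w$1, w$2, w$3) \<noteq> (0, 0, 0)" using w(3) by (simp add: vec_eq3)
  ultimately show "x \<in> plane_pts q (u 1) (u 2) (u 3)" unfolding plane_pts_def using w(2)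
    by (auto simp: realv_def)
qed

lemma u_nz: "u 1 \<noteq> 0" "u 2 \<noteq> 0" "u 3 \<noteq> 0"
proof -
  have "u 1 = Lm (vec3 1 0 0)" "u 2 = Lm (vec3 0 1 0)" "u 3 = Lm (vec3 0 0 1)" by (simp_all add: Lm_def)
  thus "u 1 \<noteq> 0" "u 2 \<noteq> 0" "u 3 \<noteq> 0" by (simp_all add: Lm_zero_iff vec_eq3)
qed

lemma rep_lemma: "conic_rep q (bb_sub q t M (Fq_conic_pts q M F)) (u 1) (u 2) (u 3) F"
proof -
  have r5: "u j \<in> real5 q" for j
  proof -
    have "u j \<noteq> 0" using u_nz exhaust_3'[of j] by auto
    thus ?thesis using u_real real5_iff by simp
  qed
  have ind: "Fq_indep3 q (u 1) (u 2) (u 3)"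
    unfolding Fq_indep3_def
  proof (intro allI impI)
    fix a b c assume h: "a \<in> Fq q \<and> b \<in> Fq q \<and> c \<in> Fq q \<and> a *s u 1 + b *s u 2 + c *s u 3 = 0"
    hence "Lm (vec3 a b c) = 0" using Lm_vec3 by simp
    hence "vec3 a b c = 0" by (simp add: Lm_zero_iff)
    thus "a = 0 \<and> b = 0 \<and> c = 0" by (simp add: vec_eq3)
  qed
  have N: "bb_sub q t M (Fq_conic_pts q M F) = conic_on (Fq q) (u 1) (u 2) (u 3) F"
    by (simp add: CON_char conic_on_char CON_def realv_def)
  show ?thesis unfolding conic_rep_def using r5 ind N Fo Fnd by blast
qed

lemma claim1: "nondeg_conic_in_plane q (bb_sub q t M (Fq_conic_pts q M F)) (bb_baer q t M)"
proof -
  have Pl: "bb_baer q t M = plane_pts q (u 1) (u 2) (u 3)" by (simp add: bb_baer_char plane_char)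
  show ?thesis unfolding nondeg_conic_in_plane_def using rep_lemma Pl by blast
qed

lemma claim2: "bb_conic q t (\<lambda>X. qf3 F (matrix_inv M *v X)) \<inter> Sigma_inf q = bb q t P \<union> bb q t Q"
proof -
  have "v \<in> bb_conic q t (\<lambda>X. qf3 F (matrix_inv M *v X)) \<inter> Sigma_inf q \<longleftrightarrow> v \<in> bb q t P \<union> bb q t Q" for v
  proof -
    have "v \<in> bb_conic q t (\<lambda>X. qf3 F (matrix_inv M *v X)) \<inter> Sigma_inf q \<longleftrightarrow>
          v \<in> real5 q \<and> (emb t v \<noteq> 0 \<and> (emb t v)$3 = 0 \<and> qf3 F (Mi *v emb t v) = 0)"
    proof -
      have "v \<in> real5 q \<Longrightarrow> emb t v \<noteq> 0" using emb_zero_real real5_iff by blast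
      thus ?thesis by (auto simp: bb_conic_def Sigma_inf_def Mi_def)
    qed
    also have "\<dots> \<longleftrightarrow> v \<in> real5 q \<and> emb t v \<in> pcone UNIV P \<union> pcone UNIV Q"
      using meet_iff[of "emb t v"] by simp
    also have "\<dots> \<longleftrightarrow> v \<in> bb q t P \<union> bb q t Q" by (auto simp: bb_def)
    finally show ?thesis .
  qed
  thus ?thesis by blast
qed

end


context fqf begin
lemma H90:
  fixes w :: "'k^3"
  assumes "w \<noteq> 0" "conjv q w = e *s w"
  shows "\<exists>r d. realv r \<and> r \<noteq> 0 \<and> d \<noteq> 0 \<and> w = d *s r"
proof -
  obtain i where i: "w$i \<noteq> 0" using assms(1) by (auto simp: vec_eq_iff)
  define d where "d = w$i"
  define r where "r = (1/d) *s w"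
  have dnz: "d \<noteq> 0" using i d_def by simp
  have wr: "w = d *s r" using dnz by (simp add: r_def vector_smult_assoc)
  have di: "d ^ q = e * d" using arg_cong[OF assms(2), of "\<lambda>v. v$i"] by (simp add: d_def)
  have "d ^ q \<noteq> 0" using dnz by simp
  hence enz: "e \<noteq> 0" using di by auto
  have "conjv q r = ((1/d) ^ q * e) *s w" by (simp add: r_def conjv_scale assms(2) vector_smult_assoc)
  also have "(1/d) ^ q * e = 1 / d" using di dnz enz by (simp add: power_one_over field_simps)
  finally have "conjv q r = r" by (simp add: r_def)
  hence "realv r" by (simp add: realv_conj)
  moreover have "r \<noteq> 0" using wr assms(1) by auto
  ultimately show ?thesis using dnz wr by blast
qed
end

lemma pcone_memI: "(c::'a::field) \<noteq> 0 \<Longrightarrow> c *s X \<in> pcone UNIV X"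
  unfolding pcone_def by blast

context bbs2 begin

lemma Sinf: "bb_sub q t M (Fq_conic_pts q M F) \<inter> Sigma_inf q
     = (bb q t P \<inter> bb_baer q t M) \<union> (bb q t Q \<inter> bb_baer q t M)"
proof (rule set_eqI, rule iffI)
  fix v assume "v \<in> bb_sub q t M (Fq_conic_pts q M F) \<inter> Sigma_inf q"
  hence v: "v \<in> CON" "v$5 = 0" by (auto simp: CON_char Sigma_inf_def)
  then obtain w where w: "v = Lm w" "realv w" "w \<noteq> 0" "qf3 F w = 0" unfolding CON_def by blast
  have "(emb t v)$3 = 0" using v(2) by simp
  hence "nd w = 0" using w(1) by (simp add: emb_Lm Av3 del: emb_c)
  hence "(M *v w)$3 = 0" by (simp add: M3)
  moreover have "M *v w \<noteq> 0" using w(3) M_zero by simp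
  ultimately have "M *v w \<in> pcone UNIV P \<union> pcone UNIV Q" using meet_iff[of "M *v w"] w(4) by simp
  moreover have "v \<in> bb_baer q t M" using w bb_baer_char unfolding PL_def by blast
  ultimately show "v \<in> (bb q t P \<inter> bb_baer q t M) \<union> (bb q t Q \<inter> bb_baer q t M)"
    using Lm_bb_pcone w by blast
next
  fix v assume h: "v \<in> (bb q t P \<inter> bb_baer q t M) \<union> (bb q t Q \<inter> bb_baer q t M)"
  then obtain R where R: "R = P \<or> R = Q" "v \<in> bb q t R" "v \<in> PL" using bb_baer_char by blast
  obtain w where w: "v = Lm w" "realv w" "w \<noteq> 0" using R(3) unfolding PL_def by blast
  obtain d where d: "d \<noteq> 0" "emb t v = d *s R" using R(2) by (auto simp: bb_mem)
  have "M *v w = (lam * d) *s R" using d w(1) by (simp add: MA emb_Lm[symmetric] vsa)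
  moreover have "lam * d \<noteq> 0" using lam d by simp
  ultimately have "M *v w \<in> pcone UNIV R" using pcone_memI by metis
  hence "M *v w \<in> pcone UNIV P \<union> pcone UNIV Q" using R(1) by blast
  hence m: "(M *v w)$3 = 0" "qf3 F w = 0" using meet_iff[of "M *v w"] by auto
  have "v \<in> CON" unfolding CON_def using w m by blast
  moreover have "v$5 = 0"
  proof -
    have "nd w = 0" using m(1) lam by (simp add: M3)
    hence "(emb t v)$3 = 0" using w(1) by (simp add: emb_Lm Av3 del: emb_c)
    thus ?thesis by simp
  qed
  moreover have "v \<in> real5 q" using R(2) by (simp add: bb_def)
  ultimately show "v \<in> bb_sub q t M (Fq_conic_pts q M F) \<inter> Sigma_inf q"
    by (simp add: CON_char Sigma_inf_def)
qed

lemma conj_meet: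
  assumes "R = P \<or> R = Q"
  shows "M *v conjv q (Mi *v R) \<in> pcone UNIV P \<union> pcone UNIV Q"
proof -
  have "R \<in> pcone UNIV R" using pcone_memI[of 1 R] by simp
  hence "R \<in> pcone UNIV P \<union> pcone UNIV Q" using assms by blast
  hence R: "R \<noteq> 0" "R$3 = 0" "qf3 F (Mi *v R) = 0" using meet_iff[of R] by auto
  define wR where "wR = Mi *v R"
  have "(M *v wR)$3 = 0" using R by (simp add: wR_def)
  hence "nd wR = 0" using lam by (simp add: M3)
  hence "(M *v conjv q wR)$3 = 0" by (simp add: M3 nd_conj fr_zero)
  moreover have "wR \<noteq> 0" using R(1) wR_def by (metis M_Mi_v matrix_vector_mult_0_right)
  hence "M *v conjv q wR \<noteq> 0" by (simp add: M_zero conjv_eq_0_iff)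
  moreover have "qf3 F (Mi *v (M *v conjv q wR)) = 0" using R(3) by (simp add: qf3_conj[OF Fo] wR_def fr_zero)
  ultimately show ?thesis using meet_iff wR_def by blast
qed

lemma in_baer:
  assumes "R \<noteq> 0" "M *v conjv q (Mi *v R) \<in> pcone UNIV R"
  shows "R \<in> baer_pts q M"
proof -
  define wR where "wR = Mi *v R"
  obtain e where e: "e \<noteq> 0" "M *v conjv q wR = e *s R" using assms(2) by (auto simp: pcone_iff wR_def)
  have "M *v conjv q wR = M *v (e *s wR)" using e by (simp add: M_scale wR_def)
  hence "conjv q wR = e *s wR" by (rule M_inj)
  moreover have "wR \<noteq> 0" using assms(1) wR_def by (metis M_Mi_v matrix_vector_mult_0_right)
  ultimately obtain r d where rd: "realv r" "r \<noteq> 0" "d \<noteq> 0" "wR = d *s r" using H90 by blast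
  have "R = d *s (M *v r)" using rd(4) by (metis M_Mi_v M_scale wR_def)
  thus ?thesis unfolding baer_pts_def using rd realv_def by blast
qed

lemma tangent: assumes "pcone UNIV P = pcone UNIV Q" shows "P \<in> baer_pts q M"
  using conj_meet[of P] assms in_baer P(1) by auto

lemma point_lemma:
  assumes "R \<in> baer_pts q M" "R$3 = 0"
  shows "\<exists>r. realv r \<and> r \<noteq> 0 \<and> bb q t R \<inter> bb_baer q t M = pcone (Fq q) (Lm r)"
proof -
  obtain c r where cr: "R = c *s (M *v r)" "c \<noteq> 0" "r \<noteq> 0" "realv r" using assms(1) by (rule baer_ptsE)
  have "bb q t R \<inter> PL = pcone (Fq q) (Lm r)"
  proof (rule set_eqI, rule iffI)
    fix v assume "v \<in> bb q t R \<inter> PL"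
    then obtain w' where w': "v = Lm w'" "realv w'" "w' \<noteq> 0" "v \<in> bb q t R" unfolding PL_def by blast
    obtain d where d: "d \<noteq> 0" "emb t v = d *s R" using w'(4) by (auto simp: bb_mem)
    have "A *v w' = A *v ((d * c * lam) *s r)" using d(2) w'(1) cr(1) by (simp add: emb_Lm MA A_scale vsa)
    hence we: "w' = (d * c * lam) *s r" by (rule A_inj)
    obtain i where i: "r$i \<noteq> 0" using cr(3) by (auto simp: vec_eq_iff)
    have "w'$i = (d * c * lam) * r$i" using we by simp
    hence "d * c * lam = w'$i / r$i" using i by simp
    hence eF: "d * c * lam \<in> Fq q" using w'(2) cr(4) by (simp add: realv_def)
    have "d * c * lam \<noteq> 0" using d cr lam by simp
    moreover have "v = (d * c * lam) *s Lm r" using w'(1) we by (simp add: Lm_scale)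
    ultimately show "v \<in> pcone (Fq q) (Lm r)" unfolding pcone_def using eF by blast
  next
    fix v assume "v \<in> pcone (Fq q) (Lm r)"
    then obtain e where e: "v = e *s Lm r" "e \<in> Fq q" "e \<noteq> 0" unfolding pcone_def by blast
    have v: "v = Lm (e *s r)" using e by (simp add: Lm_scale)
    have rr: "realv (e *s r)" "e *s r \<noteq> 0" using e cr realv_scale by (auto simp: vec_eq_iff)
    have "M *v (e *s r) = (e / c) *s R" using cr e by (simp add: M_scale vsa)
    moreover have "e / c \<noteq> 0" using e cr by simp
    ultimately have "M *v (e *s r) \<in> pcone UNIV R" using pcone_memI by metis
    hence "v \<in> bb q t R" using v rr Lm_bb_pcone by simp
    moreover have "v \<in> PL" unfolding PL_def using v rr by blast
    ultimately show "v \<in> bb q t R \<inter> PL" by blast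
  qed
  thus ?thesis using cr bb_baer_char by auto
qed

lemma is_point_R:
  assumes "R \<in> baer_pts q M" "R$3 = 0"
  shows "is_point (Fq q) (bb q t R \<inter> bb_baer q t M)"
proof -
  obtain r where r: "realv r" "r \<noteq> 0" "bb q t R \<inter> bb_baer q t M = pcone (Fq q) (Lm r)"
    using point_lemma[OF assms] by blast
  have "Lm r \<noteq> 0" "\<forall>i. Lm r $ i \<in> Fq q" using r Lm_zero_iff Lm_real[OF r(1)] by (auto simp: realv_def)
  thus ?thesis unfolding is_point_def using r(3) by blast
qed

lemma distinct_PQ:
  assumes "pcone UNIV P \<noteq> pcone UNIV Q" "P \<in> baer_pts q M"
  shows "bb q t P \<inter> bb_baer q t M \<noteq> bb q t Q \<inter> bb_baer q t M"
proof
  assume eq: "bb q t P \<inter> bb_baer q t M = bb q t Q \<inter> bb_baer q t M"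
  obtain r where r: "realv r" "r \<noteq> 0" "bb q t P \<inter> bb_baer q t M = pcone (Fq q) (Lm r)"
    using point_lemma[OF assms(2) P(2)] by blast
  have "Lm r \<in> pcone (Fq q) (Lm r)" unfolding pcone_def by (auto intro!: exI[of _ 1])
  hence "Lm r \<in> bb q t P" "Lm r \<in> bb q t Q" using r(3) eq by auto
  then obtain c1 c2 where c: "c1 \<noteq> 0" "emb t (Lm r) = c1 *s P" "c2 \<noteq> 0" "emb t (Lm r) = c2 *s Q"
    unfolding bb_mem by blast
  have "P = (c2 / c1) *s Q" using c by (metis (no_types, lifting) vector_smult_assoc vector_smult_lid
        nonzero_eq_divide_eq divide_inverse_commute mult.commute)
  moreover have "c2 / c1 \<noteq> 0" using c by simp
  ultimately have "pcone UNIV P = pcone UNIV Q" using pcone_scale by metis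
  thus False using assms(1) by simp
qed

end

context bbs2 begin

lemma gline_psi: "a \<in> gline q t \<Longrightarrow> psi a = 0"
  by (simp add: gline_def vec_eq3 mult.commute)

lemma gline_I: assumes "a \<noteq> 0" "psi a = 0" shows "a \<in> gline q t"
proof -
  have "(psi a)$1 = 0" "(psi a)$2 = 0" "(psi a)$3 = 0" using assms(2) by simp_all
  thus ?thesis using assms(1) by (simp add: gline_def mult.commute)
qed

lemma vec_lin: "a *s X + b *s (c *s X) = (a + b * c) *s (X::'k^'nn)"
  by (simp add: vec_eq_iff algebra_simps)

lemma G_exists:
  assumes "R \<noteq> 0" "R$3 = 0"
  shows "\<exists>a. a \<in> lspan UNIV (bb q t R) \<and> psi a = 0 \<and> emb t a = c *s R"
proof -
  define vR where "vR = vec5 (re (R$1)) (im (R$1)) (re (R$2)) (im (R$2)) 0"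
  define vR' where "vR' = vec5 (re (t * R$1)) (im (t * R$1)) (re (t * R$2)) (im (t * R$2)) 0"
  have e1: "emb t vR = R" using assms(2) by (simp add: vR_def vec_eq3 re_im)
  have e2: "emb t vR' = t *s R" using assms(2) by (simp add: vR'_def vec_eq3 re_im)
  have r1: "realv vR" "realv vR'" unfolding realv_def vR_def vR'_def by (subst forall5, simp)+
  have n1: "vR \<noteq> 0" using e1 assms(1) by auto
  have "t *s R \<noteq> 0" using t_nz assms(1) by (auto simp: vec_eq_iff)
  hence n2: "vR' \<noteq> 0" using e2 by auto
  have b1: "vR \<in> bb q t R" using r1 n1 e1 unfolding bb_mem by (intro conjI exI[of _ 1]) simp_all
  have b2: "vR' \<in> bb q t R" using r1 n2 e2 t_nz unfolding bb_mem by blast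
  have ne: "vR \<noteq> vR'"
  proof
    assume "vR = vR'"
    hence "R = t *s R" using e1 e2 by simp
    hence "(1 - t) *s R = 0" by (simp add: vec_eq_iff algebra_simps)
    hence "t = 1" using assms(1) by (auto simp: vec_eq_iff)
    thus False using t_not_Fq by simp
  qed
  define \<beta> where "\<beta> = c / (t - t ^ q)"
  define \<alpha> where "\<alpha> = - \<beta> * t ^ q"
  have "\<alpha> + \<beta> * t = \<beta> * (t - t ^ q)" by (simp add: \<alpha>_def algebra_simps)
  also have "\<dots> = c" using t_sub_nz by (simp add: \<beta>_def)
  finally have ab1: "\<alpha> + \<beta> * t = c" .
  have ab2: "\<alpha> + \<beta> * t ^ q = 0" by (simp add: \<alpha>_def)
  have "\<alpha> *s vR + \<beta> *s vR' \<in> lspan UNIV (bb q t R)" by (rule lspan_two[OF b1 b2 ne]) simp_all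
  moreover have "emb t (\<alpha> *s vR + \<beta> *s vR') = c *s R"
    by (simp add: emb_add emb_scale e1 e2 vec_lin ab1)
  moreover have "psi (\<alpha> *s vR + \<beta> *s vR') = 0"
    by (simp add: psi_add psi_scale psi_real[OF r1(1)] psi_real[OF r1(2)] e1 e2 conjv_scale vec_lin ab2)
  ultimately show ?thesis by blast
qed

lemma special_pt:
  assumes R: "R \<noteq> 0" "R$3 = 0" "qf3 F (Mi *v R) = 0" and S: "S \<noteq> 0" "S$3 = 0"
    and cs: "M *v conjv q (Mi *v R) \<in> pcone UNIV S"
  shows "is_point UNIV (conic_on UNIV (u 1) (u 2) (u 3) F \<inter> join (gpt q t R) (conjv q ` gpt q t S))"
proof -
  define wR where "wR = Mi *v R"
  define x where "x = Lm wR"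
  have wRnz: "wR \<noteq> 0" using R(1) wR_def by (metis M_Mi_v matrix_vector_mult_0_right)
  have xnz: "x \<noteq> 0" using wRnz by (simp add: x_def Lm_zero_iff)
  have MwR: "M *v wR = R" by (simp add: wR_def)
  have emb_x: "emb t x = (1/lam) *s R" by (simp add: x_def emb_Lm Av MwR)
  obtain d where d: "d \<noteq> 0" "M *v conjv q wR = d *s S" using cs by (auto simp: pcone_iff wR_def)
  have psi_x: "psi x = ((d/lam) ^ q) *s conjv q S"
    by (simp add: x_def psi_Lm cA_conj Av d(2) vsa conjv_scale power_mult_distrib power_divide)
  have conic: "conic_on UNIV (u 1) (u 2) (u 3) F = {Lm w | w. w \<noteq> 0 \<and> qf3 F w = 0}"
    by (simp add: conic_on_char)
  have "conic_on UNIV (u 1) (u 2) (u 3) F \<inter> join (gpt q t R) (conjv q ` gpt q t S) = pcone UNIV x"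
  proof (rule set_eqI, rule iffI)
    fix y assume y: "y \<in> conic_on UNIV (u 1) (u 2) (u 3) F \<inter> join (gpt q t R) (conjv q ` gpt q t S)"
    then obtain w where w: "y = Lm w" "w \<noteq> 0" "qf3 F w = 0" using conic by blast
    have yj: "y \<in> lspan UNIV (gpt q t R \<union> conjv q ` gpt q t S)" using y by (simp add: join_def)
    have Padd: "\<exists>c. emb t (v1 + v2) = c *s R" if h1: "\<exists>c. emb t v1 = c *s R" and h2: "\<exists>c. emb t v2 = c *s R" for v1 v2
    proof -
      obtain c1 c2 where "emb t v1 = c1 *s R" "emb t v2 = c2 *s R" using h1 h2 by blast
      hence "emb t (v1 + v2) = (c1 + c2) *s R" by (simp add: emb_add vec_eq_iff algebra_simps)
      thus ?thesis by blast
    qed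
    have Pscale: "\<exists>c'. emb t (c *s v1) = c' *s R" if h1: "\<exists>c. emb t v1 = c *s R" for c v1
    proof -
      obtain c1 where "emb t v1 = c1 *s R" using h1 by blast
      hence "emb t (c *s v1) = (c * c1) *s R" by (simp add: emb_scale vsa)
      thus ?thesis by blast
    qed
    have P0: "\<exists>c. emb t 0 = c *s R" by (intro exI[of _ 0]) simp
    have "\<exists>c. emb t y = c *s R"
      using yj P0 Padd Pscale
    proof (rule lspan_induct)
      fix s assume s: "s \<in> gpt q t R \<union> conjv q ` gpt q t S"
      show "\<exists>c. emb t s = c *s R"
      proof (cases "s \<in> gpt q t R")
        case True
        hence "s \<in> lspan UNIV (bb q t R)" by (simp add: gpt_def ext_def)
        thus ?thesis using P0 Padd Pscale
        proof (rule lspan_induct)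
          fix s' assume "s' \<in> bb q t R"
          thus "\<exists>c. emb t s' = c *s R" by (auto simp: bb_mem)
        qed
      next
        case False
        then obtain a where a: "s = conjv q a" "a \<in> gpt q t S" using s by blast
        hence "psi a = 0" using gline_psi by (simp add: gpt_def)
        hence "emb t s = 0 *s R" using a(1) by (simp add: emb_conj)
        thus ?thesis by blast
      qed
    qed
    then obtain c where c: "emb t y = c *s R" by blast
    have lA: "lam *s (A *v wR) = R" using MA[of wR] MwR by simp
    have "A *v ((c * lam) *s wR) = c *s R" by (simp add: A_scale lA flip: vsa)
    hence "A *v w = A *v ((c * lam) *s wR)"
      using c w(1) by (simp add: emb_Lm)
    hence we: "w = (c * lam) *s wR" by (rule A_inj)
    hence "c * lam \<noteq> 0" using w(2) by auto
    moreover have "y = (c * lam) *s x" using w(1) we by (simp add: x_def Lm_scale)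
    ultimately show "y \<in> pcone UNIV x" using pcone_memI by metis
  next
    fix y assume "y \<in> pcone UNIV x"
    then obtain e where e: "e \<noteq> 0" "y = e *s x" by (auto simp: pcone_iff)
    have "e *s wR \<noteq> 0" using e(1) wRnz by (auto simp: vec_eq_iff)
    moreover have "qf3 F (e *s wR) = 0" using R(3) by (simp add: qf3_scale wR_def)
    moreover have "y = Lm (e *s wR)" using e by (simp add: x_def Lm_scale)
    ultimately have yc: "y \<in> conic_on UNIV (u 1) (u 2) (u 3) F" using conic by blast
    obtain a where a: "a \<in> lspan UNIV (bb q t R)" "psi a = 0" "emb t a = (e / lam) *s R"
      using G_exists[OF R(1,2)] by blast
    obtain a' where a': "a' \<in> lspan UNIV (bb q t S)" "psi a' = 0" "emb t a' = (e ^ q * (d / lam)) *s S"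
      using G_exists[OF S] by blast
    have "(e / lam) *s R \<noteq> 0" using e(1) lam R(1) by (auto simp: vec_eq_iff)
    hence anz: "a \<noteq> 0" using a(3) by auto
    have "e ^ q * (d / lam) \<noteq> 0" using e(1) d(1) lam by simp
    hence "(e ^ q * (d / lam)) *s S \<noteq> 0" using S(1) by (auto simp: vec_eq_iff)
    hence a'nz: "a' \<noteq> 0" using a'(3) by auto
    have aG: "a \<in> gpt q t R" unfolding gpt_def ext_def using a anz gline_I by blast
    have a'G: "a' \<in> gpt q t S" unfolding gpt_def ext_def using a' a'nz gline_I by blast
    have eb: "emb t (conjv q a') = 0" by (simp add: emb_conj a'(2))
    have ne: "a \<noteq> conjv q a'" using eb a(3) \<open>(e / lam) *s R \<noteq> 0\<close> by auto
    have ya: "y = a + conjv q a'"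
    proof (rule emb_psi_inj)
      show "emb t y = emb t (a + conjv q a')"
        using e(2) by (simp add: emb_add eb a(3) emb_scale emb_x vsa)
      have sc: "(e ^ q * (d / lam)) ^ q = e * (d / lam) ^ q" by (simp only: power_mult_distrib fr_fr)
      have "psi (a + conjv q a') = (e ^ q * (d / lam)) ^ q *s conjv q S"
        by (simp only: psi_add psi_conj a(2) a'(3) conjv_scale) simp
      also have "\<dots> = (e * (d / lam) ^ q) *s conjv q S" by (simp only: sc)
      also have "\<dots> = psi y" using e(2) by (simp add: psi_scale psi_x vsa)
      finally show "psi y = psi (a + conjv q a')" by simp
    qed
    have "1 *s a + 1 *s conjv q a' \<in> lspan UNIV (gpt q t R \<union> conjv q ` gpt q t S)"
      by (rule lspan_two) (use aG a'G ne in auto)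
    hence "y \<in> lspan UNIV (gpt q t R \<union> conjv q ` gpt q t S)" using ya by simp
    moreover have "y \<noteq> 0" using e xnz by (auto simp: vec_eq_iff)
    ultimately have "y \<in> join (gpt q t R) (conjv q ` gpt q t S)" by (simp add: join_def)
    thus "y \<in> conic_on UNIV (u 1) (u 2) (u 3) F \<inter> join (gpt q t R) (conjv q ` gpt q t S)"
      using yc by blast
  qed
  thus ?thesis unfolding is_point_def using xnz by blast
qed

end

context bbs2 begin
lemma claim3:
  assumes "pcone UNIV P \<noteq> pcone UNIV Q" "P \<notin> baer_pts q M" "Q \<notin> baer_pts q M"
  shows "special q (gpt q t P) (gpt q t Q) (bb_sub q t M (Fq_conic_pts q M F))"
proof -
  have "P \<in> pcone UNIV P" "Q \<in> pcone UNIV Q" using pcone_memI[of 1 P] pcone_memI[of 1 Q] by simp_all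
  hence Pm: "qf3 F (Mi *v P) = 0" and Qm: "qf3 F (Mi *v Q) = 0" using meet_iff by blast+
  have cP: "M *v conjv q (Mi *v P) \<in> pcone UNIV Q" using conj_meet[of P] in_baer[OF P(1)] assms(2) by blast
  have cQ: "M *v conjv q (Mi *v Q) \<in> pcone UNIV P" using conj_meet[of Q] in_baer[OF Q(1)] assms(3) by blast
  have s1: "is_point UNIV (conic_on UNIV (u 1) (u 2) (u 3) F \<inter> join (gpt q t P) (conjv q ` gpt q t Q))"
    by (rule special_pt[OF P(1) P(2) Pm Q(1) Q(2) cP])
  have s2: "is_point UNIV (conic_on UNIV (u 1) (u 2) (u 3) F \<inter> join (gpt q t Q) (conjv q ` gpt q t P))"
    by (rule special_pt[OF Q(1) Q(2) Qm P(1) P(2) cQ])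
  have "join (conjv q ` gpt q t P) (gpt q t Q) = join (gpt q t Q) (conjv q ` gpt q t P)"
    by (simp add: join_def Un_commute)
  thus ?thesis unfolding special_def using rep_lemma s1 s2 by metis
qed
end

theorem theorem5p3:
  fixes q :: nat and t :: "'k::{finite,field}" and M :: "'k ^ 3 ^ 3"
    and F :: "'k qform" and P Q :: "'k ^ 3"
  assumes card: "CARD('k) = q ^ 2"
    and prim: "primitive_elt t"
    and M: "invertible M"
    and secant: "baer_secant q M"
    and F: "qf_over (Fq q) F" "nondeg_qf F"
    and P: "P \<noteq> 0" "P $ 3 = 0"
    and Q: "Q \<noteq> 0" "Q $ 3 = 0"
    and meet: "{X \<in> Cplus_pts M F. X $ 3 = 0} = pcone UNIV P \<union> pcone UNIV Q"
  shows "nondeg_conic_in_plane q (bb_sub q t M (Fq_conic_pts q M F)) (bb_baer q t M)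
     \<and> bb_conic q t (\<lambda>X. qf3 F (matrix_inv M *v X)) \<inter> Sigma_inf q = bb q t P \<union> bb q t Q
     \<and> (pcone UNIV P = pcone UNIV Q \<longrightarrow>
          P \<in> baer_pts q M
          \<and> is_point (Fq q) (bb q t P \<inter> bb_baer q t M)
          \<and> bb_sub q t M (Fq_conic_pts q M F) \<inter> Sigma_inf q = bb q t P \<inter> bb_baer q t M)
     \<and> (pcone UNIV P \<noteq> pcone UNIV Q \<and> P \<in> baer_pts q M \<and> Q \<in> baer_pts q M \<longrightarrow>
          is_point (Fq q) (bb q t P \<inter> bb_baer q t M)
          \<and> is_point (Fq q) (bb q t Q \<inter> bb_baer q t M)
          \<and> bb q t P \<inter> bb_baer q t M \<noteq> bb q t Q \<inter> bb_baer q t M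
          \<and> bb_sub q t M (Fq_conic_pts q M F) \<inter> Sigma_inf q
              = (bb q t P \<inter> bb_baer q t M) \<union> (bb q t Q \<inter> bb_baer q t M))
     \<and> (pcone UNIV P \<noteq> pcone UNIV Q \<and> P \<notin> baer_pts q M \<and> Q \<notin> baer_pts q M \<longrightarrow>
          special q (gpt q t P) (gpt q t Q) (bb_sub q t M (Fq_conic_pts q M F)))"
proof -
  interpret bbs q t M F P Q
    by unfold_locales (use card prim M secant F P Q meet in auto)
  obtain lam n where ln: "lam \<noteq> 0" "realv n" "n \<noteq> 0" "\<forall>j. M$3$j = lam * n$j"
    using row3_exists by blast
  interpret bbs2 q t M F P Q lam n
    by unfold_locales (use ln in auto)
  have bbPQ: "pcone UNIV P = pcone UNIV Q \<Longrightarrow> bb q t Q = bb q t P" by (simp add: bb_def)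
  show ?thesis
    using claim1 claim2 tangent is_point_R Sinf distinct_PQ claim3 bbPQ P(2) Q(2) by auto
qed


end
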